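(* For every $\lambda>0$ and every $h\ge 0$ such that $$h<\underline h(\lambda):=\frac{3}{4\lambda}\log \mathsf M\!\left(-\tfrac{4\lambda}{3}\right),$$ one has $\textsc{f}(\lambda,h)>0$, i.e. $(\lambda,h)$ is localized.
   Context: Let $S=(S_n)_{n\ge 0}$ be the simple symmetric random walk on $\mathbb Z$ with $S_0=0$ (law $\mathbf P$, expectation $\mathbf E$). Let $\omega=(\omega_n)_{n\ge1}$ be i.i.d. real random variables, independent of $S$, with law $\mathbb P$ (expectation $\mathbb E$), such that $\mathsf M(\alpha):=\mathbb E[e^{\alpha\omega_1}]<\infty$ for all $\alpha\in\mathbb R$, $\mathbb E[\omega_1]=0$ and $\mathbb E[\omega_1^2]=1$. Sign convention: $\mathrm{sign}(S_n)$ is the usual sign when $S_n\neq0$, and if $S_{2n}=0$ one sets $\mathrm{sign}(S_{2n}):=\mathrm{sign}(S_{2n-1})$. Put $\Delta_n:=(1-\mathrm{sign}(S_n))/2\in\{0,1\}$. For $\lambda\ge0$, $h\ge0$, $N\in2\mathbb N$, $x\in\mathbb Z$ define $Z^{\lambda,h}_{N,\omega}:=\mathbf E\big[\exp\big(-2\lambda\sum_{n=1}^N(\omega_n+h)\Delta_n\big)\big]$ and $Z^{\lambda,h}_{N,\omega}(x):=\mathbf E\big[\exp\big(-2\lambda\sum_{n=1}^N(\omega_n+h)\Delta_n\big);\,S_N=x\big]$. It is known that the limit $\textsc{f}(\lambda,h):=\lim_{N\to\infty}\frac1N\log Z^{\lambda,h}_{N,\omega}$ exists $\mathbb P$-a.s.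 and in $L^1(\mathbb P)$, is non-random, and equals $\lim_{N\to\infty,\,N\in2\mathbb N}\frac1N\log Z^{\lambda,h}_{N,\omega}(0)$ a.s. The point $(\lambda,h)$ is called localized if $\textsc{f}(\lambda,h)>0$. *)

theory Defs
  imports "HOL-Probability.Probability"
begin

text \<open>Walk paths of length N are encoded as boolean lists (True = step +1, False = step -1);
  the simple random walk expectation is the uniform average over the 2^N such lists.\<close>

definition walk_pos :: "bool list \<Rightarrow> nat \<Rightarrow> int" where
  "walk_pos xs n = (\<Sum>i<n. if xs ! i then 1 else -1)"

text \<open>Delta_n = (1 - sign S_n)/2, with sign S_n := sign S_(n-1) when S_n = 0 (n >= 1).\<close>
definition walk_Delta :: "bool list \<Rightarrow> nat \<Rightarrow> real" where
  "walk_Delta xs n =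
     (if walk_pos xs n < 0 \<or> (walk_pos xs n = 0 \<and> walk_pos xs (n - 1) < 0) then 1 else 0)"

definition paths :: "nat \<Rightarrow> bool list set" where
  "paths N = {xs. length xs = N}"

definition copolymer_Z :: "real \<Rightarrow> real \<Rightarrow> nat \<Rightarrow> (nat \<Rightarrow> real) \<Rightarrow> real" where
  "copolymer_Z lam h N \<omega> =
     (\<Sum>xs\<in>paths N. exp (- 2 * lam * (\<Sum>n=1..N. (\<omega> n + h) * walk_Delta xs n))) / 2 ^ N"

definition disorder :: "real measure \<Rightarrow> (nat \<Rightarrow> real) measure" where
  "disorder \<mu> = PiM UNIV (\<lambda>_. \<mu>)"

text \<open>Free energy: limit over N in 2N of (1/N) log Z_N; as the a.s. limit is non-random and
  the convergence holds in L^1, it equals the limit of (1/N) E[log Z_N].\<close>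
definition free_energy :: "real measure \<Rightarrow> real \<Rightarrow> real \<Rightarrow> real" where
  "free_energy \<mu> lam h =
     lim (\<lambda>k. (\<integral>\<omega>. ln (copolymer_Z lam h (2 * k) \<omega>) \<partial>disorder \<mu>) / real (2 * k))"

definition mgf :: "real measure \<Rightarrow> real \<Rightarrow> real" where
  "mgf \<mu> \<alpha> = (\<integral>x. exp (\<alpha> * x) \<partial>\<mu>)"

end

theory Submission
  imports Defs "HOL-Real_Asymp.Real_Asymp"
begin

lemma walk_pos_0[simp]: "walk_pos xs 0 = 0" by (simp add: walk_pos_def)

lemma walk_pos_Suc: "walk_pos xs (Suc n) = walk_pos xs n + (if xs ! n then 1 else -1)"
  by (simp add: walk_pos_def)

lemma walk_pos_step: "walk_pos xs (Suc n) = walk_pos xs n + 1 \<or> walk_pos xs (Suc n) = walk_pos xs n - 1"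
  by (simp add: walk_pos_Suc)

lemma walk_pos_Cons: "walk_pos (x # xs) (Suc n) = (if x then 1 else -1) + walk_pos xs n"
  unfolding walk_pos_def sum.lessThan_Suc_shift by simp

lemma walk_pos_append1: "n \<le> length xs \<Longrightarrow> walk_pos (xs @ ys) n = walk_pos xs n"
  unfolding walk_pos_def by (intro sum.cong) (auto simp: nth_append)

lemma walk_pos_append2: "walk_pos (xs @ ys) (length xs + j) = walk_pos xs (length xs) + walk_pos ys j"
  by (induction j) (simp_all add: walk_pos_Suc nth_append walk_pos_append1)

lemma walk_pos_take: "n \<le> m \<Longrightarrow> walk_pos (take m xs) n = walk_pos xs n"
  unfolding walk_pos_def by (intro sum.cong) auto

lemma walk_pos_drop: "t \<le> length xs \<Longrightarrow> walk_pos (drop t xs) j = walk_pos xs (t + j) - walk_pos xs t"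
proof -
  assume t: "t \<le> length xs"
  have "walk_pos xs (t + j) = walk_pos (take t xs @ drop t xs) (length (take t xs) + j)"
    using t by simp
  also have "\<dots> = walk_pos (take t xs) t + walk_pos (drop t xs) j"
    using t by (subst walk_pos_append2) simp
  also have "walk_pos (take t xs) t = walk_pos xs t" by (simp add: walk_pos_take)
  finally show ?thesis by simp
qed

lemma walk_pos_map_Not: "j \<le> length xs \<Longrightarrow> walk_pos (map Not xs) j = - walk_pos xs j"
  by (induction j) (simp_all add: walk_pos_Suc)

lemma walk_pos_parity: "even (walk_pos xs n + int n)"
proof (induction n)
  case 0 then show ?case by simp
next
  case (Suc n)
  have "walk_pos xs (Suc n) + int (Suc n) = (walk_pos xs n + int n) + (if xs ! n then 2 else 0)"
    by (simp add: walk_pos_Suc)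
  moreover have "even (if xs ! n then 2 else (0::int))" by simp
  ultimately show ?case using Suc by (metis even_add)
qed

lemma walk_pos_count: "walk_pos xs (length xs) = 2 * int (length (filter id xs)) - int (length xs)"
proof (induction xs)
  case Nil then show ?case by simp
next
  case (Cons x xs) then show ?case by (simp add: walk_pos_Cons)
qed

lemma walk_pos_step_pred: "j \<ge> 1 \<Longrightarrow> walk_pos xs j = walk_pos xs (j - 1) + 1 \<or> walk_pos xs j = walk_pos xs (j - 1) - 1"
  using walk_pos_step[of xs "j - 1"] by simp

lemma Delta_01: "walk_Delta xs n = 0 \<or> walk_Delta xs n = 1"
  by (simp add: walk_Delta_def)

lemma Delta_append1: "n \<le> length xs \<Longrightarrow> walk_Delta (xs @ ys) n = walk_Delta xs n"
  unfolding walk_Delta_def by (simp add: walk_pos_append1)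

lemma Delta_append2:
  assumes "walk_pos xs (length xs) = 0" "1 \<le> j"
  shows "walk_Delta (xs @ ys) (length xs + j) = walk_Delta ys j"
proof -
  have e: "length xs + j - 1 = length xs + (j - 1)" using assms by simp
  show ?thesis unfolding walk_Delta_def e walk_pos_append2 using assms by simp
qed

definition En :: "real \<Rightarrow> (nat \<Rightarrow> real) \<Rightarrow> bool list \<Rightarrow> real" where
  "En h \<omega> xs = (\<Sum>n=1..length xs. (\<omega> n + h) * walk_Delta xs n)"

definition shiftw :: "nat \<Rightarrow> (nat \<Rightarrow> real) \<Rightarrow> nat \<Rightarrow> real" where
  "shiftw k \<omega> = (\<lambda>n. \<omega> (n + k))"

lemma shiftw_shiftw[simp]: "shiftw a (shiftw b \<omega>) = shiftw (a + b) \<omega>"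
  by (simp add: shiftw_def ac_simps)

lemma shiftw_0[simp]: "shiftw 0 \<omega> = \<omega>" by (simp add: shiftw_def)

lemma En_append:
  assumes z: "walk_pos xs (length xs) = 0"
  shows "En h \<omega> (xs @ ys) = En h \<omega> xs + En h (shiftw (length xs) \<omega>) ys"
proof -
  let ?a = "length xs" and ?b = "length ys"
  let ?f = "\<lambda>n. (\<omega> n + h) * walk_Delta (xs @ ys) n"
  have "En h \<omega> (xs @ ys) = sum ?f {1..?a} + sum ?f {1 + ?a..?b + ?a}"
    unfolding En_def using sum.ub_add_nat[of 1 ?a ?f ?b] by (simp add: add.commute)
  also have "sum ?f {1..?a} = En h \<omega> xs"
    unfolding En_def by (intro sum.cong) (auto simp: Delta_append1)
  also have "sum ?f {1 + ?a..?b + ?a} = (\<Sum>j=1..?b. ?f (j + ?a))"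
    by (rule sum.shift_bounds_cl_nat_ivl)
  also have "\<dots> = En h (shiftw ?a \<omega>) ys"
    unfolding En_def shiftw_def
    by (intro sum.cong refl) (metis Delta_append2[OF z] add.commute atLeastAtMost_iff)
  finally show ?thesis .
qed

definition nonneg :: "bool list \<Rightarrow> bool" where
  "nonneg d \<longleftrightarrow> (\<forall>j \<le> length d. walk_pos d j \<ge> 0)"
definition nonpos :: "bool list \<Rightarrow> bool" where
  "nonpos d \<longleftrightarrow> (\<forall>j \<le> length d. walk_pos d j \<le> 0)"

lemma En_nonneg: "nonneg d \<Longrightarrow> En h \<omega> d = 0"
  unfolding En_def
proof (intro sum.neutral ballI)
  fix n assume d: "nonneg d" and n: "n \<in> {1..length d}"
  then have "walk_pos d n \<ge> 0" "walk_pos d (n - 1) \<ge> 0" by (auto simp: nonneg_def)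
  then have "walk_Delta d n = 0" by (auto simp: walk_Delta_def)
  then show "(\<omega> n + h) * walk_Delta d n = 0" by simp
qed

lemma En_nonpos: "nonpos d \<Longrightarrow> En h \<omega> d = (\<Sum>n=1..length d. \<omega> n + h)"
  unfolding En_def
proof (intro sum.cong refl)
  fix n assume d: "nonpos d" and n: "n \<in> {1..length d}"
  then have a: "walk_pos d n \<le> 0" "walk_pos d (n - 1) \<le> 0" by (auto simp: nonpos_def)
  have "walk_pos d n = walk_pos d (n - 1) + 1 \<or> walk_pos d n = walk_pos d (n - 1) - 1"
    using n walk_pos_step_pred by auto
  then have "walk_Delta d n = 1" using a by (auto simp: walk_Delta_def)
  then show "(\<omega> n + h) * walk_Delta d n = \<omega> n + h" by simp
qed

lemma En_abs: "\<bar>En h \<omega> xs\<bar> \<le> (\<Sum>n=1..length xs. \<bar>\<omega> n + h\<bar>)"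
  unfolding En_def
proof (rule order.trans[OF sum_abs], intro sum_mono)
  fix n
  show "\<bar>(\<omega> n + h) * walk_Delta xs n\<bar> \<le> \<bar>\<omega> n + h\<bar>"
    using Delta_01[of xs n] by auto
qed

lemma finite_paths[simp]: "finite (paths N)"
proof -
  have "finite {xs. set xs \<subseteq> (UNIV::bool set) \<and> length xs = N}" by (rule finite_lists_length_eq) simp
  then show ?thesis by (simp add: paths_def)
qed

lemma card_paths: "card (paths N) = 2 ^ N"
proof -
  have "card {xs. set xs \<subseteq> (UNIV::bool set) \<and> length xs = N} = card (UNIV::bool set) ^ N"
    by (rule card_lists_length_eq) simp
  then show ?thesis by (simp add: paths_def)
qed

declare binomial_Suc_Suc[simp del]

lemma card_count_true:
  "card {xs::bool list. length xs = n \<and> length (filter id xs) = k} = n choose k"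
proof (induction n arbitrary: k)
  case 0
  have eq: "{xs::bool list. length xs = 0 \<and> length (filter id xs) = k} = (if k = 0 then {[]} else {})" by auto
  show ?case unfolding eq by simp
next
  case (Suc n)
  let ?A = "{ys::bool list. length ys = n \<and> Suc (length (filter id ys)) = k}"
  let ?B = "{ys::bool list. length ys = n \<and> length (filter id ys) = k}"
  have eq: "{xs::bool list. length xs = Suc n \<and> length (filter id xs) = k} = Cons True ` ?A \<union> Cons False ` ?B"
  proof (intro set_eqI iffI)
    fix xs assume xs: "xs \<in> {xs::bool list. length xs = Suc n \<and> length (filter id xs) = k}"
    then obtain y ys where yy: "xs = y # ys" "length ys = n" 
      by (auto simp: length_Suc_conv)
    show "xs \<in> Cons True ` ?A \<union> Cons False ` ?B"
    proof (cases y)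
      case True
      then have "ys \<in> ?A" using xs yy by simp
      then show ?thesis using yy True by blast
    next
      case False
      then have "ys \<in> ?B" using xs yy by simp
      then show ?thesis using yy False by blast
    qed
  next
    fix xs assume "xs \<in> Cons True ` ?A \<union> Cons False ` ?B"
    then show "xs \<in> {xs::bool list. length xs = Suc n \<and> length (filter id xs) = k}" by auto
  qed
  have fin: "finite ?A" "finite ?B"
    by (rule finite_subset[OF _ finite_paths[of n]], force simp: paths_def)+
  have "card (Cons True ` ?A \<union> Cons False ` ?B) = card (Cons True ` ?A) + card (Cons False ` ?B)"
    by (rule card_Un_disjoint) (use fin in auto)
  also have "\<dots> = card ?A + card ?B" by (simp add: card_image)
  finally have c: "card {xs::bool list. length xs = Suc n \<and> length (filter id xs) = k} = card ?A + card ?B"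
    unfolding eq .
  show ?case
  proof (cases k)
    case 0
    then have "?A = {}" by simp
    then have "card ?A = 0" by (simp only: card.empty)
    then show ?thesis using c Suc.IH[of k] 0 by (metis add_0 binomial_n_0)
  next
    case (Suc k')
    then have "?A = {ys::bool list. length ys = n \<and> length (filter id ys) = k'}" by simp
    then have cA: "card ?A = n choose k'" using Suc.IH[of k'] by (simp only:)
    have cB: "card ?B = n choose k" by (rule Suc.IH)
    show ?thesis using c cA cB Suc by (metis binomial_Suc_Suc)
  qed
qed

lemma card_endpoint:
  assumes "2 * int k - int n = z"
  shows "card {xs \<in> paths n. walk_pos xs n = z} = n choose k"
proof -
  have "{xs \<in> paths n. walk_pos xs n = z} = {xs::bool list. length xs = n \<and> length (filter id xs) = k}"
    using assms by (auto simp: paths_def walk_pos_count)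
  then show ?thesis by (simp add: card_count_true)
qed

lemma hit_minus1:
  "walk_pos xs j < 0 \<Longrightarrow> \<exists>i\<le>j. walk_pos xs i = -1"
proof (induction j)
  case 0 then show ?case by simp
next
  case (Suc j)
  show ?case
  proof (cases "walk_pos xs j < 0")
    case True then show ?thesis using Suc by (meson le_SucI)
  next
    case False
    then have "walk_pos xs (Suc j) = -1" using Suc.prems walk_pos_step[of xs j] by auto
    then show ?thesis by blast
  qed
qed

definition tau :: "bool list \<Rightarrow> nat" where "tau xs = (LEAST i. walk_pos xs i = -1)"
definition reflw :: "bool list \<Rightarrow> bool list" where
  "reflw xs = take (tau xs) xs @ map Not (drop (tau xs) xs)"

lemma tau_props:
  assumes "walk_pos xs j = -1" "j \<le> length xs"
  shows "tau xs \<le> length xs" "walk_pos xs (tau xs) = -1" "\<And>i. i < tau xs \<Longrightarrow> walk_pos xs i \<noteq> -1"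
proof -
  show "walk_pos xs (tau xs) = -1" unfolding tau_def by (rule LeastI[of _ j]) (rule assms(1))
  have "tau xs \<le> j" unfolding tau_def by (rule Least_le) (rule assms(1))
  then show "tau xs \<le> length xs" using assms by simp
  show "\<And>i. i < tau xs \<Longrightarrow> walk_pos xs i \<noteq> -1" unfolding tau_def by (rule not_less_Least)
qed

lemma refl_length[simp]: "length (reflw xs) = length xs"
  by (simp add: reflw_def)

lemma refl_pos1:
  assumes "tau xs \<le> length xs" "i \<le> tau xs"
  shows "walk_pos (reflw xs) i = walk_pos xs i"
proof -
  have "walk_pos (reflw xs) i = walk_pos (take (tau xs) xs) i"
    unfolding reflw_def using assms by (intro walk_pos_append1) simp
  also have "\<dots> = walk_pos xs i" using assms by (simp add: walk_pos_take)
  finally show ?thesis .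
qed

lemma refl_pos2:
  assumes "tau xs \<le> length xs" "tau xs + j \<le> length xs"
  shows "walk_pos (reflw xs) (tau xs + j) = 2 * walk_pos xs (tau xs) - walk_pos xs (tau xs + j)"
proof -
  let ?t = "tau xs"
  have lp: "length (take ?t xs) = ?t" using assms(1) by simp
  have "walk_pos (reflw xs) (?t + j) = walk_pos (take ?t xs) ?t + walk_pos (map Not (drop ?t xs)) j"
    unfolding reflw_def using walk_pos_append2[of "take ?t xs" "map Not (drop ?t xs)" j, unfolded lp] .
  also have "walk_pos (take ?t xs) ?t = walk_pos xs ?t"
    by (simp add: walk_pos_take)
  also have "walk_pos (map Not (drop ?t xs)) j = - walk_pos (drop ?t xs) j"
    using assms by (intro walk_pos_map_Not) simp
  also have "walk_pos (drop ?t xs) j = walk_pos xs (?t + j) - walk_pos xs ?t"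
    using assms by (intro walk_pos_drop) simp
  finally show ?thesis by simp
qed

lemma refl_tau:
  assumes "walk_pos xs j = -1" "j \<le> length xs"
  shows "tau (reflw xs) = tau xs"
proof -
  note tp = tau_props[OF assms]
  have a: "walk_pos (reflw xs) (tau xs) = -1" using refl_pos1[OF tp(1) order.refl] tp(2) by simp
  have b: "walk_pos (reflw xs) i \<noteq> -1" if "i < tau xs" for i
    using refl_pos1[OF tp(1)] that tp(3) by simp
  show ?thesis unfolding tau_def[of "reflw xs"]
  proof (rule Least_equality)
    show "walk_pos (reflw xs) (tau xs) = -1" by (rule a)
    fix y assume y: "walk_pos (reflw xs) y = -1"
    show "tau xs \<le> y"
    proof (rule ccontr)
      assume "\<not> tau xs \<le> y"
      then have "y < tau xs" by simp
      with b y show False by blast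
    qed
  qed
qed

lemma refl_refl:
  assumes "walk_pos xs j = -1" "j \<le> length xs"
  shows "reflw (reflw xs) = xs"
proof -
  note tp = tau_props[OF assms]
  have t: "tau (reflw xs) = tau xs" by (rule refl_tau[OF assms])
  have "take (tau xs) (reflw xs) = take (tau xs) xs" using tp by (simp add: reflw_def)
  moreover have "drop (tau xs) (reflw xs) = map Not (drop (tau xs) xs)" using tp by (simp add: reflw_def)
  ultimately show ?thesis unfolding reflw_def[of "reflw xs"] t by (simp add: comp_def)
qed

definition HB :: "nat \<Rightarrow> bool list set" where
  "HB n = {xs \<in> paths n. walk_pos xs n = 0 \<and> (\<exists>j\<le>n. walk_pos xs j < 0)}"
definition E2 :: "nat \<Rightarrow> bool list set" where
  "E2 n = {xs \<in> paths n. walk_pos xs n = -2}"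

lemma refl_HB: assumes "xs \<in> HB n" shows "reflw xs \<in> E2 n"
proof -
  from assms obtain j where j: "j \<le> n" "walk_pos xs j < 0" and l: "length xs = n" and e: "walk_pos xs n = 0"
    by (auto simp: HB_def paths_def)
  obtain i where i: "i \<le> j" "walk_pos xs i = -1" using hit_minus1[OF j(2)] by blast
  note tp = tau_props[OF i(2), unfolded l, OF order.trans[OF i(1) j(1)]]
  have "walk_pos (reflw xs) (tau xs + (n - tau xs)) = 2 * walk_pos xs (tau xs) - walk_pos xs (tau xs + (n - tau xs))"
    using tp l by (intro refl_pos2) auto
  then have "walk_pos (reflw xs) n = -2" using tp e by simp
  then show ?thesis using l by (simp add: E2_def paths_def)
qed

lemma refl_E2: assumes "xs \<in> E2 n" shows "reflw xs \<in> HB n"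
proof -
  from assms have l: "length xs = n" and e: "walk_pos xs n = -2" by (auto simp: E2_def paths_def)
  obtain i where i: "i \<le> n" "walk_pos xs i = -1" using hit_minus1[of xs n] e by auto
  note tp = tau_props[OF i(2), unfolded l, OF i(1)]
  have "walk_pos (reflw xs) (tau xs + (n - tau xs)) = 2 * walk_pos xs (tau xs) - walk_pos xs (tau xs + (n - tau xs))"
    using tp l by (intro refl_pos2) auto
  then have "walk_pos (reflw xs) n = 0" using tp e by simp
  moreover have "walk_pos (reflw xs) (tau xs) < 0" using refl_pos1[of xs "tau xs"] tp(1,2) l by simp
  ultimately show ?thesis using l tp(1) by (auto simp: HB_def paths_def)
qed

lemma card_HB_E2: "card (HB n) = card (E2 n)"
proof (rule bij_betw_same_card[of reflw], rule bij_betw_byWitness[where f' = reflw])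
  show "\<forall>a\<in>HB n. reflw (reflw a) = a"
  proof
    fix xs assume "xs \<in> HB n"
    then obtain j where j: "j \<le> n" "walk_pos xs j < 0" and l: "length xs = n"
      by (auto simp: HB_def paths_def)
    obtain i where i: "i \<le> j" "walk_pos xs i = -1" using hit_minus1[OF j(2)] by blast
    show "reflw (reflw xs) = xs" using i j l by (intro refl_refl[of xs i]) auto
  qed
  show "\<forall>a\<in>E2 n. reflw (reflw a) = a"
  proof
    fix xs assume "xs \<in> E2 n"
    then have l: "length xs = n" and e: "walk_pos xs n = -2" by (auto simp: E2_def paths_def)
    obtain i where i: "i \<le> n" "walk_pos xs i = -1" using hit_minus1[of xs n] e by auto
    show "reflw (reflw xs) = xs" using i l by (intro refl_refl[of xs i]) auto
  qed
  show "reflw ` HB n \<subseteq> E2 n" using refl_HB by auto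
  show "reflw ` E2 n \<subseteq> HB n" using refl_E2 by auto
qed

definition Bp :: "nat \<Rightarrow> bool list set" where
  "Bp m = {xs \<in> paths (2*m). walk_pos xs (2*m) = 0 \<and> (\<forall>j\<le>2*m. walk_pos xs j \<ge> 0)}"

lemma card_Bp: "card (Bp m) + card (HB (2*m)) = (2*m) choose m"
proof -
  have "{xs \<in> paths (2*m). walk_pos xs (2*m) = 0} = Bp m \<union> HB (2*m)"
    by (auto simp: Bp_def HB_def not_le)
  moreover have "Bp m \<inter> HB (2*m) = {}" by (auto simp: Bp_def HB_def)
  moreover have "finite (Bp m)" "finite (HB (2*m))" by (auto simp: Bp_def HB_def)
  moreover have "card {xs \<in> paths (2*m). walk_pos xs (2*m) = 0} = (2*m) choose m"
    by (rule card_endpoint) simp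
  ultimately show ?thesis by (metis card_Un_disjoint)
qed

lemma card_E2: "card (E2 (2 * Suc m)) = (2 * Suc m) choose m"
  unfolding E2_def by (rule card_endpoint) simp

lemma card_Bp_mult: "real (card (Bp m)) * (real m + 1) = real ((2*m) choose m)"
proof (cases m)
  case 0
  have "Bp 0 = {[]}" by (auto simp: Bp_def paths_def)
  then show ?thesis using 0 by simp
next
  case (Suc m')
  have c: "card (Bp m) + ((2*m) choose m') = (2*m) choose m"
    using card_Bp[of m] card_HB_E2[of "2*m"] card_E2[of m'] Suc by simp
  have "Suc m' * (Suc (m' + m) choose Suc m') = Suc m * (Suc (m' + m) choose m')"
    by (rule Suc_times_binomial_add)
  moreover have e: "Suc (m' + m) = 2*m" using Suc by simp
  ultimately have "m * ((2*m) choose m) = Suc m * ((2*m) choose m')" by (simp only: e flip: Suc)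
  then have "m * ((2*m) choose m) = (m + 1) * ((2*m) choose m')" by simp
  then have "real m * real ((2*m) choose m) = (real m + 1) * real ((2*m) choose m')"
    by (metis of_nat_Suc of_nat_mult Suc_eq_plus1 add.commute)
  moreover have "real (card (Bp m)) + real ((2*m) choose m') = real ((2*m) choose m)"
    using c by (metis of_nat_add)
  ultimately show ?thesis by algebra
qed

lemma central_binom_rec: "real ((2 * Suc m) choose Suc m) * (real m + 1) = real ((2*m) choose m) * 2 * (2 * real m + 1)"
proof -
  have a: "Suc (Suc (2*m)) * (Suc (2*m) choose m) = (Suc (Suc (2*m)) choose Suc m) * Suc m"
    by (rule Suc_times_binomial_eq)
  have b: "Suc (2*m) * (2*m choose m) = (Suc (2*m) choose Suc m) * Suc m"
    by (rule Suc_times_binomial_eq)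
  have c': "(Suc (2*m) choose Suc m) = (Suc (2*m) choose m)"
    by (subst binomial_symmetric) auto
  have "real ((2 * Suc m) choose Suc m) * (real m + 1) * (real m + 1)
      = real (Suc (Suc (2*m)) choose Suc m) * Suc m * Suc m" by (simp add: algebra_simps)
  also have "\<dots> = real (Suc (Suc (2*m))) * (Suc (2*m) choose m) * Suc m"
    using arg_cong[OF a, of real] by (simp only: of_nat_mult)
  also have "\<dots> = real (Suc (Suc (2*m))) * (Suc (2*m) * (2*m choose m))"
    using arg_cong[OF b, of real] c' by (simp only: of_nat_mult mult.assoc)
  also have "\<dots> = (real ((2*m) choose m) * 2 * (2 * real m + 1)) * (real m + 1)" by (simp add: algebra_simps)
  finally have X: "real ((2 * Suc m) choose Suc m) * (real m + 1) * (real m + 1) = (real ((2*m) choose m) * 2 * (2 * real m + 1)) * (real m + 1)" .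
  have "real m + 1 \<noteq> 0" by simp
  from mult_right_cancel[OF this] X show ?thesis by blast
qed

lemma central_binom_lower: "m \<ge> 1 \<Longrightarrow> 16 ^ m \<le> (real ((2*m) choose m))^2 * (4 * real m)"
proof (induction m rule: dec_induct)
  case base then show ?case by simp
next
  case (step m)
  let ?c = "real ((2*m) choose m)"
  let ?d = "real ((2 * Suc m) choose Suc m)"
  have m: "real m \<ge> 1" using step by simp
  have key: "(4 * real m) * (real m + 1) \<le> (2 * real m + 1)^2" by (simp add: power2_eq_square algebra_simps)
  have A: "16^m * ((4 * real m) * (real m + 1)) \<le> (?c^2 * (4 * real m)) * (2 * real m + 1)^2"
    by (rule mult_mono[OF step.IH key]) auto
  then have "(4*real m) * (16^m * (real m + 1)) \<le> (4 * real m) * (?c^2 * (2 * real m + 1)^2)"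
    by (simp only: mult_ac)
  then have B: "16^m * (real m + 1) \<le> ?c^2 * (2 * real m + 1)^2"
    by (rule mult_left_le_imp_le) (use m in simp)
  have C: "(?d * (real m + 1))^2 = 4 * ?c^2 * (2*real m+1)^2"
    using central_binom_rec[of m] by (simp add: power_mult_distrib)
  have "16 ^ Suc m * (real m + 1) = 16 * (16^m * (real m + 1))" by simp
  also have "\<dots> \<le> 16 * (?c^2 * (2 * real m + 1)^2)" using B by simp
  also have "\<dots> = 4 * (?d * (real m + 1))^2" using C by simp
  also have "\<dots> = 4 * ?d^2 * (real m + 1) * (real m + 1)" by (simp add: power_mult_distrib power2_eq_square)
  finally have "16 ^ Suc m * (real m + 1) \<le> 4 * ?d^2 * (real m + 1) * (real m + 1)" .
  then have "16 ^ Suc m \<le> 4 * ?d^2 * (real m + 1)"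
    by (rule mult_right_le_imp_le) (simp add: add_pos_nonneg)
  then show ?case by (simp add: algebra_simps)
qed

definition kap :: "nat \<Rightarrow> real" where "kap m = real (card (Bp m)) / 4 ^ m"

lemma kap_lower: "kap m \<ge> 1 / (2 * (real m + 1) * sqrt (real m + 1))"
proof (cases "m = 0")
  case True
  have "Bp 0 = {[]}" by (auto simp: Bp_def paths_def)
  then show ?thesis using True by (simp add: kap_def)
next
  case False
  let ?c = "real ((2*m) choose m)"
  have m: "real m \<ge> 1" using False by simp
  have c: "16 ^ m \<le> ?c^2 * (4 * real m)" using central_binom_lower[of m] False by simp
  have e1: "(?c * (2 * sqrt (real m)))^2 = ?c^2 * (4 * real m)"
    by (simp add: power_mult_distrib)
  have e2: "((4::real) ^ m)^2 = 16 ^ m"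
    by (simp add: power2_eq_square power_mult_distrib[symmetric])
  have "(4 ^ m)^2 \<le> (?c * (2 * sqrt (real m)))^2"
    using c unfolding e1 e2 .
  then have "4 ^ m \<le> ?c * (2 * sqrt (real m))"
    by (rule power2_le_imp_le) simp
  also have "\<dots> \<le> ?c * (2 * sqrt (real m + 1))" by (intro mult_left_mono) auto
  finally have A: "4 ^ m \<le> ?c * (2 * sqrt (real m + 1))" .
  have "real (card (Bp m)) = ?c / (real m + 1)"
    using card_Bp_mult[of m] by (simp add: eq_divide_eq)
  then have "kap m = ?c / ((real m + 1) * 4 ^ m)"
    by (simp add: kap_def)
  have cpos: "?c > 0" by simp
  have e1: "(real m + 1) * (?c * (2 * sqrt (real m + 1))) = ?c * (2 * (real m + 1) * sqrt (real m + 1))"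
    by (simp add: ac_simps)
  have "1 / (2 * (real m + 1) * sqrt (real m + 1)) = ?c / ((real m + 1) * (?c * (2 * sqrt (real m + 1))))"
    unfolding e1 using cpos by simp
  also have "\<dots> \<le> ?c / ((real m + 1) * 4^m)"
    by (rule divide_left_mono) (use A cpos in \<open>auto intro: mult_left_mono mult_pos_pos\<close>)
  finally show ?thesis using \<open>kap m = _\<close> by simp
qed

lemma kap_pos: "kap m > 0"
proof -
  have "0 < 1 / (2 * (real m + 1) * sqrt (real m + 1))" by (simp add: add_pos_nonneg)
  from less_le_trans[OF this kap_lower[of m]] show ?thesis .
qed

lemma ln_kap: "ln (kap m) \<ge> - ln 2 - 3/2 * ln (real m + 1)"
proof -
  have p: "0 < 2 * (real m + 1) * sqrt (real m + 1)" by simp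
  have "ln (1 / (2 * (real m + 1) * sqrt (real m + 1))) \<le> ln (kap m)"
    using kap_lower[of m] p kap_pos[of m] by (subst ln_le_cancel_iff) auto
  moreover have "ln (1 / (2 * (real m + 1) * sqrt (real m + 1))) = - ln 2 - 3/2 * ln (real m + 1)"
  proof -
    have l1: "ln (2 * (real m + 1) * sqrt (real m + 1)) = ln (2 * (real m + 1)) + ln (sqrt (real m + 1))"
      by (rule ln_mult_pos) auto
    have l2: "ln (2 * (real m + 1)) = ln 2 + ln (real m + 1)" by (rule ln_mult_pos) auto
    have l3: "ln (sqrt (real m + 1)) = ln (real m + 1) / 2" by (simp add: ln_sqrt)
    have l4: "ln (1 / (2 * (real m + 1) * sqrt (real m + 1))) = - ln (2 * (real m + 1) * sqrt (real m + 1))"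
      using p by (simp add: ln_div)
    show ?thesis unfolding l4 l1 l2 l3 by simp
  qed
  ultimately show ?thesis by simp
qed

definition bridges :: "nat \<Rightarrow> bool list set" where
  "bridges N = {xs \<in> paths N. walk_pos xs N = 0}"

definition Zr :: "real \<Rightarrow> real \<Rightarrow> nat \<Rightarrow> (nat \<Rightarrow> real) \<Rightarrow> real" where
  "Zr lam h N \<omega> = (\<Sum>xs\<in>bridges N. exp (-2 * lam * En h \<omega> xs)) / 2 ^ N"

lemma finite_bridges[simp]: "finite (bridges N)"
  by (simp add: bridges_def)

lemma Z_eq: "copolymer_Z lam h N \<omega> = (\<Sum>xs\<in>paths N. exp (-2 * lam * En h \<omega> xs)) / 2 ^ N"
  unfolding copolymer_Z_def En_def
  by (intro arg_cong2[where f="(/)"] sum.cong refl) (auto simp: paths_def)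

lemma Bp_sub: "Bp m \<subseteq> bridges (2*m)"
  by (auto simp: Bp_def bridges_def)

lemma Bp_nonneg: "xs \<in> Bp m \<Longrightarrow> nonneg xs"
  by (auto simp: Bp_def nonneg_def paths_def)

lemma Bp_length: "xs \<in> Bp m \<Longrightarrow> length xs = 2 * m"
  by (auto simp: Bp_def paths_def)

definition Bn :: "nat \<Rightarrow> bool list set" where "Bn m = map Not ` Bp m"

lemma card_Bn: "card (Bn m) = card (Bp m)"
proof -
  have "inj (map Not)"
  proof (rule injI)
    fix x y :: "bool list" assume "map Not x = map Not y"
    then have "map Not (map Not x) = map Not (map Not y)" by simp
    then show "x = y" by (simp add: comp_def)
  qed
  then show ?thesis unfolding Bn_def by (intro card_image) (rule inj_on_subset[OF _ subset_UNIV])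
qed

lemma Bn_props: assumes "xs \<in> Bn m"
  shows "nonpos xs" "length xs = 2 * m" "xs \<in> bridges (2*m)"
proof -
  obtain ys where ys: "ys \<in> Bp m" "xs = map Not ys" using assms by (auto simp: Bn_def)
  then have l: "length ys = 2 * m" by (simp add: Bp_length)
  have p: "walk_pos xs j = - walk_pos ys j" if "j \<le> 2 * m" for j
    using ys l that walk_pos_map_Not[of j ys] by simp
  show "length xs = 2 * m" using ys l by simp
  show "nonpos xs" using ys p l unfolding nonpos_def Bp_def by auto
  show "xs \<in> bridges (2*m)" using ys p l unfolding bridges_def Bp_def paths_def by auto
qed

lemma pow2_4: "(2::real) ^ (2 * m) = 4 ^ m"
  by (simp add: power_mult)

lemma Zr_nonneg: "Zr lam h N \<omega> \<ge> 0"
  unfolding Zr_def by (intro divide_nonneg_pos sum_nonneg) auto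

lemma Zr_ge_kap: "Zr lam h (2*m) \<omega> \<ge> kap m"
proof -
  have "real (card (Bp m)) = (\<Sum>xs\<in>Bp m. exp (-2 * lam * En h \<omega> xs))"
    by (simp add: En_nonneg Bp_nonneg)
  also have "\<dots> \<le> (\<Sum>xs\<in>bridges (2*m). exp (-2 * lam * En h \<omega> xs))"
    by (intro sum_mono2 Bp_sub) auto
  finally show ?thesis unfolding Zr_def kap_def pow2_4 by (intro divide_right_mono) auto
qed

lemma Zr_pos: "Zr lam h (2*m) \<omega> > 0"
  using Zr_ge_kap[of m lam h \<omega>] kap_pos[of m] by linarith

lemma Zr_ge_kap_neg: "Zr lam h (2*m) \<omega> \<ge> kap m * exp (-2 * lam * (\<Sum>n=1..2*m. \<omega> n + h))"
proof -
  have "real (card (Bp m)) * exp (-2 * lam * (\<Sum>n=1..2*m. \<omega> n + h))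
      = (\<Sum>xs\<in>Bn m. exp (-2 * lam * En h \<omega> xs))"
    by (simp add: En_nonpos Bn_props card_Bn)
  also have "\<dots> \<le> (\<Sum>xs\<in>bridges (2*m). exp (-2 * lam * En h \<omega> xs))"
    by (intro sum_mono2) (auto simp: Bn_props)
  finally show ?thesis unfolding Zr_def kap_def pow2_4
    by (simp add: divide_right_mono)
qed

lemma Zr_super: "Zr lam h (N + M) \<omega> \<ge> Zr lam h N \<omega> * Zr lam h M (shiftw N \<omega>)"
proof -
  let ?f = "\<lambda>\<omega> xs. exp (-2 * lam * En h \<omega> xs)"
  have "(\<Sum>xs\<in>bridges N. ?f \<omega> xs) * (\<Sum>ys\<in>bridges M. ?f (shiftw N \<omega>) ys)
      = (\<Sum>xs\<in>bridges N. \<Sum>ys\<in>bridges M. ?f \<omega> xs * ?f (shiftw N \<omega>) ys)"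
    by (rule sum_product)
  also have "\<dots> = (\<Sum>(xs, ys)\<in>bridges N \<times> bridges M. ?f \<omega> (xs @ ys))"
    unfolding sum.cartesian_product[symmetric]
  proof (intro sum.cong refl)
    fix xs ys assume "xs \<in> bridges N" "ys \<in> bridges M"
    then have l: "length xs = N" "walk_pos xs (length xs) = 0" by (auto simp: bridges_def paths_def)
    have e: "-2 * lam * En h \<omega> (xs @ ys) = (-2 * lam * En h \<omega> xs) + (-2 * lam * En h (shiftw N \<omega>) ys)"
      using En_append[OF l(2), of h \<omega> ys] l(1) by (simp add: distrib_left)
    show "?f \<omega> xs * ?f (shiftw N \<omega>) ys = ?f \<omega> (xs @ ys)"
      by (simp only: e exp_add)
  qed
  also have "\<dots> = (\<Sum>zs\<in>(\<lambda>(xs, ys). xs @ ys) ` (bridges N \<times> bridges M). ?f \<omega> zs)"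
  proof -
    have inj: "inj_on (\<lambda>(xs, ys). xs @ ys) (bridges N \<times> bridges M)"
    proof (rule inj_onI, clarify)
      fix xs ys xs' ys' assume a: "xs \<in> bridges N" "xs' \<in> bridges N" "xs @ ys = xs' @ ys'"
      have "length xs = length xs'" using a(1,2) by (simp add: bridges_def paths_def)
      from append_eq_append_conv[OF disjI1[OF this]] a(3) show "xs = xs' \<and> ys = ys'" by blast
    qed
    show ?thesis using sum.reindex[OF inj, of "?f \<omega>"] by (simp add: comp_def case_prod_unfold)
  qed
  also have "\<dots> \<le> (\<Sum>zs\<in>bridges (N + M). ?f \<omega> zs)"
  proof (intro sum_mono2)
    show "(\<lambda>(xs, ys). xs @ ys) ` (bridges N \<times> bridges M) \<subseteq> bridges (N + M)"
    proof
      fix zs assume "zs \<in> (\<lambda>(xs, ys). xs @ ys) ` (bridges N \<times> bridges M)"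
      then obtain xs ys where "zs = xs @ ys" "xs \<in> bridges N" "ys \<in> bridges M" by auto
      then show "zs \<in> bridges (N + M)"
        using walk_pos_append2[of xs ys M] by (auto simp: bridges_def paths_def)
    qed
  qed auto
  finally have A: "(\<Sum>xs\<in>bridges N. ?f \<omega> xs) * (\<Sum>ys\<in>bridges M. ?f (shiftw N \<omega>) ys) \<le> (\<Sum>zs\<in>bridges (N + M). ?f \<omega> zs)" .
  have "Zr lam h N \<omega> * Zr lam h M (shiftw N \<omega>)
     = ((\<Sum>xs\<in>bridges N. ?f \<omega> xs) * (\<Sum>ys\<in>bridges M. ?f (shiftw N \<omega>) ys)) / 2 ^ (N + M)"
    unfolding Zr_def by (simp add: power_add)
  also have "\<dots> \<le> (\<Sum>zs\<in>bridges (N + M). ?f \<omega> zs) / 2 ^ (N + M)"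
    by (rule divide_right_mono[OF A]) simp
  finally show ?thesis unfolding Zr_def .
qed

lemma Zr_le_Z: "Zr lam h N \<omega> \<le> copolymer_Z lam h N \<omega>"
  unfolding Zr_def Z_eq by (intro divide_right_mono sum_mono2) (auto simp: bridges_def)

lemma Z_upper:
  assumes "lam \<ge> 0"
  shows "copolymer_Z lam h N \<omega> \<le> exp (2 * lam * (\<Sum>n=1..N. \<bar>\<omega> n + h\<bar>))"
proof -
  have "(\<Sum>xs\<in>paths N. exp (-2 * lam * En h \<omega> xs)) \<le> (\<Sum>xs\<in>paths N. exp (2 * lam * (\<Sum>n=1..N. \<bar>\<omega> n + h\<bar>)))"
  proof (intro sum_mono)
    fix xs assume "xs \<in> paths N"
    then have "- En h \<omega> xs \<le> (\<Sum>n=1..N. \<bar>\<omega> n + h\<bar>)" using En_abs[of h \<omega> xs] by (auto simp: paths_def)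
    then have "lam * (- En h \<omega> xs) \<le> lam * (\<Sum>n=1..N. \<bar>\<omega> n + h\<bar>)"
      using assms by (rule mult_left_mono)
    then show "exp (-2 * lam * En h \<omega> xs) \<le> exp (2 * lam * (\<Sum>n=1..N. \<bar>\<omega> n + h\<bar>))"
      by simp
  qed
  also have "\<dots> = 2 ^ N * exp (2 * lam * (\<Sum>n=1..N. \<bar>\<omega> n + h\<bar>))" by (simp add: card_paths)
  finally show ?thesis unfolding Z_eq by (simp add: field_simps)
qed

lemma ivt_up: "a \<le> b \<Longrightarrow> walk_pos xs a \<le> 0 \<Longrightarrow> walk_pos xs b \<ge> 0 \<Longrightarrow> \<exists>k. a \<le> k \<and> k \<le> b \<and> walk_pos xs k = 0"
proof (induction b rule: dec_induct)
  case base then show ?case by auto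
next
  case (step b)
  show ?case
  proof (cases "walk_pos xs b \<ge> 0")
    case True
    then obtain k where "a \<le> k" "k \<le> b" "walk_pos xs k = 0" using step.IH step.prems by blast
    then show ?thesis by (intro exI[of _ k]) auto
  next
    case False
    then have "walk_pos xs (Suc b) = 0" using step.prems(2) walk_pos_step[of xs b] by auto
    then show ?thesis using step.hyps by (intro exI[of _ "Suc b"]) auto
  qed
qed

lemma ivt_down: "a \<le> b \<Longrightarrow> walk_pos xs a \<ge> 0 \<Longrightarrow> walk_pos xs b \<le> 0 \<Longrightarrow> \<exists>k. a \<le> k \<and> k \<le> b \<and> walk_pos xs k = 0"
proof (induction b rule: dec_induct)
  case base then show ?case by auto
next
  case (step b)
  show ?case
  proof (cases "walk_pos xs b \<le> 0")
    case True
    then obtain k where "a \<le> k" "k \<le> b" "walk_pos xs k = 0" using step.IH step.prems by blast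
    then show ?thesis by (intro exI[of _ k]) auto
  next
    case False
    then have "walk_pos xs (Suc b) = 0" using step.prems(2) walk_pos_step[of xs b] by auto
    then show ?thesis using step.hyps by (intro exI[of _ "Suc b"]) auto
  qed
qed

definition lastz :: "bool list \<Rightarrow> nat" where
  "lastz p = (GREATEST t. t \<le> length p \<and> walk_pos p t = 0)"

lemma lastz_props:
  shows "lastz p \<le> length p" "walk_pos p (lastz p) = 0"
    and "\<And>j. lastz p < j \<Longrightarrow> j \<le> length p \<Longrightarrow> walk_pos p j \<noteq> 0"
proof -
  let ?P = "\<lambda>t. t \<le> length p \<and> walk_pos p t = 0"
  have P0: "?P 0" by simp
  have b: "\<And>y. ?P y \<Longrightarrow> y \<le> length p" by simp
  have "?P (lastz p)" unfolding lastz_def by (rule GreatestI_nat[of ?P 0 "length p", OF P0 b])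
  then show "lastz p \<le> length p" "walk_pos p (lastz p) = 0" by auto
  fix j assume j: "lastz p < j" "j \<le> length p"
  show "walk_pos p j \<noteq> 0"
  proof
    assume "walk_pos p j = 0"
    then have "j \<le> lastz p" unfolding lastz_def by (intro Greatest_le_nat[of ?P j "length p"]) (use j in auto)
    then show False using j by simp
  qed
qed

lemma lastz_even: "even (lastz p)"
  using walk_pos_parity[of p "lastz p"] lastz_props(2)[of p] by simp

lemma tail_pos: "walk_pos (drop (lastz p) p) j = walk_pos p (lastz p + j)"
  using walk_pos_drop[OF lastz_props(1), of p j] lastz_props(2)[of p] by simp

lemma tail_nonneg:
  assumes "walk_pos p (length p) \<ge> 0"
  shows "nonneg (drop (lastz p) p)"
  unfolding nonneg_def
proof (intro allI impI)
  let ?t = "lastz p" and ?d = "drop (lastz p) p"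
  fix j assume j: "j \<le> length ?d"
  show "walk_pos ?d j \<ge> 0"
  proof (rule ccontr)
    assume neg: "\<not> walk_pos ?d j \<ge> 0"
    have ld: "length ?d = length p - ?t" by simp
    have e: "walk_pos ?d (length ?d) \<ge> 0"
      unfolding tail_pos using assms lastz_props(1)[of p] by simp
    obtain k where k: "j \<le> k" "k \<le> length ?d" "walk_pos ?d k = 0"
      using ivt_up[of j "length ?d" ?d] j neg e by auto
    have "j \<noteq> 0" using neg by (cases j) auto
    then have "?t < ?t + k" "?t + k \<le> length p" using k lastz_props(1)[of p] by auto
    then have "walk_pos p (?t + k) \<noteq> 0" by (rule lastz_props(3))
    then show False using k(3) unfolding tail_pos by simp
  qed
qed

lemma tail_nonpos:
  assumes "walk_pos p (length p) < 0"
  shows "nonpos (drop (lastz p) p)"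
  unfolding nonpos_def
proof (intro allI impI)
  let ?t = "lastz p" and ?d = "drop (lastz p) p"
  fix j assume j: "j \<le> length ?d"
  show "walk_pos ?d j \<le> 0"
  proof (rule ccontr)
    assume pos: "\<not> walk_pos ?d j \<le> 0"
    have e: "walk_pos ?d (length ?d) \<le> 0"
      unfolding tail_pos using assms lastz_props(1)[of p] by simp
    obtain k where k: "j \<le> k" "k \<le> length ?d" "walk_pos ?d k = 0"
      using ivt_down[of j "length ?d" ?d] j pos e by auto
    have "j \<noteq> 0" using pos by (cases j) auto
    then have "?t < ?t + k" "?t + k \<le> length p" using k lastz_props(1)[of p] by auto
    then have "walk_pos p (?t + k) \<noteq> 0" by (rule lastz_props(3))
    then show False using k(3) unfolding tail_pos by simp
  qed
qed

lemma En_split_lastz: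
  "En h \<omega> p = En h \<omega> (take (lastz p) p) + En h (shiftw (lastz p) \<omega>) (drop (lastz p) p)"
proof -
  let ?t = "lastz p"
  have l: "length (take ?t p) = ?t" using lastz_props(1)[of p] by simp
  have z: "walk_pos (take ?t p) (length (take ?t p)) = 0"
    unfolding l using lastz_props(2)[of p] by (simp add: walk_pos_take)
  have "En h \<omega> p = En h \<omega> (take ?t p @ drop ?t p)" by simp
  also have "\<dots> = En h \<omega> (take ?t p) + En h (shiftw ?t \<omega>) (drop ?t p)"
    using En_append[OF z] unfolding l .
  finally show ?thesis .
qed

definition Phi :: "nat \<Rightarrow> bool list \<Rightarrow> bool list set" where
  "Phi N p = (\<lambda>b. take (lastz p) p @ b) ` (if walk_pos p N \<ge> 0 then Bp ((N - lastz p) div 2) else Bn ((N - lastz p) div 2))"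

lemma Phi_props:
  assumes p: "p \<in> paths N" and N: "even N"
  shows "Phi N p \<subseteq> bridges N"
    and "\<And>q. q \<in> Phi N p \<Longrightarrow> En h \<omega> q = En h \<omega> p"
    and "\<And>q. q \<in> Phi N p \<Longrightarrow> take (lastz p) q = take (lastz p) p"
    and "card (Phi N p) = card (Bp ((N - lastz p) div 2))"
proof -
  let ?t = "lastz p" and ?r = "(N - lastz p) div 2"
  have lp: "length p = N" using p by (simp add: paths_def)
  have tN: "?t \<le> N" using lastz_props(1)[of p] lp by simp
  have r2: "2 * ?r = N - ?t" using N lastz_even[of p] tN by (simp add: dvd_div_mult_self even_diff_nat)
  have lt: "length (take ?t p) = ?t" using tN lp by simp
  have zt: "walk_pos (take ?t p) ?t = 0" using lastz_props(2)[of p] by (simp add: walk_pos_take)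
  have B: "b \<in> Bp ?r \<or> b \<in> Bn ?r \<Longrightarrow> length b = N - ?t \<and> walk_pos b (N - ?t) = 0" for b
    using r2 Bn_props[of b ?r] by (auto simp: Bp_def paths_def bridges_def)
  show "Phi N p \<subseteq> bridges N"
  proof
    fix q assume "q \<in> Phi N p"
    then obtain b where q: "q = take ?t p @ b" and b: "b \<in> Bp ?r \<or> b \<in> Bn ?r"
      unfolding Phi_def by (auto split: if_splits)
    have "walk_pos q (?t + (N - ?t)) = 0"
      unfolding q using walk_pos_append2[of "take ?t p" b "N - ?t", unfolded lt] zt B[OF b] by simp
    then show "q \<in> bridges N" using B[OF b] tN lt unfolding q by (simp add: bridges_def paths_def)
  qed
  fix q assume "q \<in> Phi N p"
  then obtain b where q: "q = take ?t p @ b" and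
      b: "if walk_pos p N \<ge> 0 then b \<in> Bp ?r else b \<in> Bn ?r"
    unfolding Phi_def by (auto split: if_splits)
  show "take ?t q = take ?t p" unfolding q using lt by simp
  have zt': "walk_pos (take ?t p) (length (take ?t p)) = 0" using zt lt by simp
  have eq1: "En h \<omega> q = En h \<omega> (take ?t p) + En h (shiftw ?t \<omega>) b"
    unfolding q using En_append[OF zt'] lt by simp
  have ld: "length (drop ?t p) = N - ?t" using lp by simp
  show "En h \<omega> q = En h \<omega> p"
  proof (cases "walk_pos p N \<ge> 0")
    case True
    then have "b \<in> Bp ?r" using b by simp
    then have "En h (shiftw ?t \<omega>) b = 0" by (simp add: En_nonneg Bp_nonneg)
    moreover have "En h (shiftw ?t \<omega>) (drop ?t p) = 0"
      using tail_nonneg[of p] True lp by (simp add: En_nonneg)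
    ultimately show ?thesis using eq1 En_split_lastz[of h \<omega> p] by simp
  next
    case False
    then have bn: "b \<in> Bn ?r" using b by simp
    then have "En h (shiftw ?t \<omega>) b = (\<Sum>n=1..N - ?t. shiftw ?t \<omega> n + h)"
      using Bn_props[OF bn] r2 by (simp add: En_nonpos)
    moreover have "En h (shiftw ?t \<omega>) (drop ?t p) = (\<Sum>n=1..N - ?t. shiftw ?t \<omega> n + h)"
      using tail_nonpos[of p] False lp ld by (simp add: En_nonpos)
    ultimately show ?thesis using eq1 En_split_lastz[of h \<omega> p] by simp
  qed
next
  let ?t = "lastz p" and ?r = "(N - lastz p) div 2"
  have inj: "inj_on (\<lambda>b. take ?t p @ b) A" for A by (rule inj_onI) simp
  show "card (Phi N p) = card (Bp ?r)"
    unfolding Phi_def by (simp add: card_image[OF inj] card_Bn)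
qed

lemma card_prefix: "t \<le> N \<Longrightarrow> card {p \<in> paths N. take t p = u} \<le> 2 ^ (N - t)"
proof -
  assume t: "t \<le> N"
  have "inj_on (drop t) {p \<in> paths N. take t p = u}"
  proof (rule inj_onI)
    fix x y assume "x \<in> {p \<in> paths N. take t p = u}" "y \<in> {p \<in> paths N. take t p = u}" "drop t x = drop t y"
    then have "take t x @ drop t x = take t y @ drop t y" by simp
    then show "x = y" by simp
  qed
  moreover have "drop t ` {p \<in> paths N. take t p = u} \<subseteq> paths (N - t)" by (auto simp: paths_def)
  ultimately have "card {p \<in> paths N. take t p = u} \<le> card (paths (N - t))"
    by (intro card_inj_on_le) auto
  then show ?thesis by (simp add: card_paths)
qed

lemma kap_lower2: "r \<le> n \<Longrightarrow> kap r \<ge> 1 / (2 * (real n + 1) * sqrt (real n + 1))"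
proof -
  assume "r \<le> n"
  then have "2 * (real r + 1) * sqrt (real r + 1) \<le> 2 * (real n + 1) * sqrt (real n + 1)"
    by (intro mult_mono) auto
  then have "1 / (2 * (real n + 1) * sqrt (real n + 1)) \<le> 1 / (2 * (real r + 1) * sqrt (real r + 1))"
    by (intro divide_left_mono mult_pos_pos) (auto simp: add_pos_nonneg)
  then show ?thesis using kap_lower[of r] by linarith
qed

lemma Z_le_Zr:
  "copolymer_Z lam h (2*n) \<omega> \<le> (2 * (real n + 1) * sqrt (real n + 1) * (2 * real n + 1)) * Zr lam h (2*n) \<omega>"
proof -
  define N where "N = 2 * n"
  define F where "F = (\<lambda>q. exp (-2 * lam * En h \<omega> q))"
  define K where "K = 2 * (real n + 1) * sqrt (real n + 1)"
  have Kpos: "K > 0" unfolding K_def by (simp add: add_pos_nonneg)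
  have evN: "even N" unfolding N_def by simp
  define c where "c = (\<lambda>p. K / 2 ^ (N - lastz p))"
  have step1: "F p \<le> (\<Sum>q\<in>{q \<in> bridges N. q \<in> Phi N p}. F q * c p)" if p: "p \<in> paths N" for p
  proof -
    have set: "{q \<in> bridges N. q \<in> Phi N p} = Phi N p" using Phi_props(1)[OF p evN] by auto
    have "(\<Sum>q\<in>Phi N p. F q * c p) = (\<Sum>q\<in>Phi N p. F p * c p)"
      by (intro sum.cong refl) (simp add: F_def Phi_props(2)[OF p evN])
    also have "\<dots> = real (card (Phi N p)) * F p * c p" by simp
    also have "real (card (Phi N p)) = kap ((N - lastz p) div 2) * 2 ^ (N - lastz p)"
    proof -
      have tN: "lastz p \<le> N" using lastz_props(1)[of p] p by (simp add: paths_def)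
      have r2: "2 * ((N - lastz p) div 2) = N - lastz p"
        using evN lastz_even[of p] tN by (simp add: dvd_div_mult_self even_diff_nat)
      have "(4::real) ^ ((N - lastz p) div 2) = 2 ^ (N - lastz p)"
        using pow2_4[of "(N - lastz p) div 2"] r2 by simp
      then show ?thesis unfolding Phi_props(4)[OF p evN] kap_def by simp
    qed
    finally have eq: "(\<Sum>q\<in>Phi N p. F q * c p) = kap ((N - lastz p) div 2) * K * F p"
      unfolding c_def by simp
    have "kap ((N - lastz p) div 2) * K \<ge> 1"
    proof -
      have "(N - lastz p) div 2 \<le> n" unfolding N_def by simp
      from kap_lower2[OF this] have "kap ((N - lastz p) div 2) \<ge> 1 / K" unfolding K_def .
      then show ?thesis using Kpos by (simp add: field_simps)
    qed
    then have "F p \<le> kap ((N - lastz p) div 2) * K * F p"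
      using mult_right_mono[of 1 "kap ((N - lastz p) div 2) * K" "F p"] by (simp add: F_def)
    then show ?thesis unfolding set eq .
  qed
  have "(\<Sum>p\<in>paths N. F p) \<le> (\<Sum>p\<in>paths N. \<Sum>q\<in>{q \<in> bridges N. q \<in> Phi N p}. F q * c p)"
    by (intro sum_mono step1)
  also have "\<dots> = (\<Sum>q\<in>bridges N. \<Sum>p\<in>{p \<in> paths N. q \<in> Phi N p}. F q * c p)"
    by (rule sum.swap_restrict) auto
  also have "\<dots> \<le> (\<Sum>q\<in>bridges N. F q * (K * (real N + 1)))"
  proof (intro sum_mono)
    fix q assume q: "q \<in> bridges N"
    let ?S = "{p \<in> paths N. q \<in> Phi N p}"
    have "(\<Sum>p\<in>?S. F q * c p) = F q * (\<Sum>p\<in>?S. c p)" by (simp add: sum_distrib_left)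
    also have "(\<Sum>p\<in>?S. c p) = (\<Sum>t\<in>{0..N}. \<Sum>p\<in>{p \<in> ?S. lastz p = t}. c p)"
    proof (rule sum.group[symmetric])
      show "finite ?S" by (rule finite_subset[OF _ finite_paths[of N]]) auto
      show "lastz ` ?S \<subseteq> {0..N}" using lastz_props(1) by (auto simp: paths_def)
    qed simp
    also have "\<dots> \<le> (\<Sum>t\<in>{0..N}. K)"
    proof (intro sum_mono)
      fix t assume t: "t \<in> {0..N}"
      have "(\<Sum>p\<in>{p \<in> ?S. lastz p = t}. c p) = (\<Sum>p\<in>{p \<in> ?S. lastz p = t}. K / 2 ^ (N - t))"
        by (intro sum.cong refl) (simp add: c_def)
      also have "\<dots> = real (card {p \<in> ?S. lastz p = t}) * (K / 2 ^ (N - t))" by simp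
      also have "\<dots> \<le> 2 ^ (N - t) * (K / 2 ^ (N - t))"
      proof (intro mult_right_mono)
        have "{p \<in> ?S. lastz p = t} \<subseteq> {p \<in> paths N. take t p = take t q}"
          using Phi_props(3)[OF _ evN] by fastforce
        then have "card {p \<in> ?S. lastz p = t} \<le> card {p \<in> paths N. take t p = take t q}"
          by (intro card_mono) auto
        also have "\<dots> \<le> 2 ^ (N - t)" using t by (intro card_prefix) auto
        finally show "real (card {p \<in> ?S. lastz p = t}) \<le> 2 ^ (N - t)"
          by (metis of_nat_le_iff of_nat_numeral of_nat_power)
      qed (use Kpos in auto)
      also have "\<dots> = K" by simp
      finally show "(\<Sum>p\<in>{p \<in> ?S. lastz p = t}. c p) \<le> K" .
    qed
    also have "(\<Sum>t\<in>{0..N}. K) = K * (real N + 1)" by simp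
    finally show "(\<Sum>p\<in>?S. F q * c p) \<le> F q * (K * (real N + 1))"
      by (simp add: F_def mult_left_mono)
  qed
  also have "\<dots> = K * (real N + 1) * (\<Sum>q\<in>bridges N. F q)"
    by (simp add: sum_distrib_left sum_distrib_right mult_ac)
  finally have A: "(\<Sum>p\<in>paths N. F p) \<le> K * (real N + 1) * (\<Sum>q\<in>bridges N. F q)" .
  have "copolymer_Z lam h N \<omega> = (\<Sum>p\<in>paths N. F p) / 2 ^ N" unfolding Z_eq F_def ..
  also have "\<dots> \<le> K * (real N + 1) * (\<Sum>q\<in>bridges N. F q) / 2 ^ N"
    by (rule divide_right_mono[OF A]) simp
  also have "\<dots> = K * (real N + 1) * Zr lam h N \<omega>" unfolding Zr_def F_def by simp
  finally show ?thesis unfolding N_def K_def by (simp add: mult_ac)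
qed

lemma ln_tangent: "(x::real) > 0 \<Longrightarrow> a > 0 \<Longrightarrow> ln x \<le> ln a + x / a - 1"
proof -
  assume x: "x > 0" and a: "a > 0"
  have "ln (x / a) \<le> x / a - 1" by (rule ln_le_minus_one) (use x a in simp)
  then show ?thesis using x a by (simp add: ln_div)
qed

definition ca :: "real \<Rightarrow> real" where "ca a = ln 2 + 3/2 * (ln a - 1) + 3/2 / a"

lemma ln_kap_tangent: "a > 0 \<Longrightarrow> ln (kap m) \<ge> - 3/2 * real m / a - ca a"
proof -
  assume a: "a > 0"
  have "ln (real m + 1) \<le> ln a + (real m + 1) / a - 1" using a by (intro ln_tangent) auto
  then have "- ln 2 - 3/2 * ln (real m + 1) \<ge> - 3/2 * real m / a - ca a"
    unfolding ca_def using a by (simp add: field_simps)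
  then show ?thesis using ln_kap[of m] by linarith
qed

definition Yb :: "real \<Rightarrow> real \<Rightarrow> nat \<Rightarrow> (nat \<Rightarrow> real) \<Rightarrow> real" where
  "Yb lam h L \<omega> = -2 * lam * (\<Sum>n=1..2*L. \<omega> n + h)"

definition phi :: "real \<Rightarrow> real \<Rightarrow> nat \<Rightarrow> real \<Rightarrow> real \<Rightarrow> (nat \<Rightarrow> real) \<Rightarrow> real" where
  "phi lam h L \<theta> a \<omega> = (if Yb lam h L \<omega> \<ge> \<theta> then Yb lam h L \<omega> + ln (kap L) - ca a else - 3/2 * real L / a)"

lemma ln_Zr_gap:
  assumes a: "a > 0"
  shows "ln (Zr lam h (2 * m) \<omega>) \<ge> - 3/2 * real m / a - ca a"
proof -
  have "ln (Zr lam h (2 * m) \<omega>) \<ge> ln (kap m)"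
    using Zr_ge_kap[of m lam h] kap_pos[of m] Zr_pos[of lam h m] by (subst ln_le_cancel_iff) auto
  then show ?thesis using ln_kap_tangent[OF a, of m] by simp
qed

lemma strategy_aux:
  assumes a: "a > 0"
  shows "ln (Zr lam h (2 * ((g + r) * L)) (shiftw (s * (2 * L)) \<omega>))
    \<ge> - 3/2 * real (g * L) / a + (\<Sum>i\<in>{s + g..<s + g + r}. phi lam h L \<theta> a (shiftw (i * (2 * L)) \<omega>)) - ca a"
proof (induction r arbitrary: s g)
  case 0
  have "ln (Zr lam h (2 * (g * L)) (shiftw (s * (2 * L)) \<omega>)) \<ge> ln (kap (g * L))"
    using Zr_ge_kap[of "g * L" lam h] kap_pos[of "g * L"] Zr_pos[of lam h "g * L"] by (subst ln_le_cancel_iff) auto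
  then show ?case using ln_kap_tangent[OF a, of "g * L"] by simp
next
  case (Suc r)
  let ?j = "s + g"
  let ?w = "shiftw (s * (2 * L)) \<omega>"
  let ?P = "\<lambda>i. phi lam h L \<theta> a (shiftw (i * (2 * L)) \<omega>)"
  have sumsplit: "(\<Sum>i\<in>{?j..<?j + Suc r}. ?P i) = ?P ?j + (\<Sum>i\<in>{Suc ?j..<Suc ?j + r}. ?P i)"
    by (simp add: sum.atLeast_Suc_lessThan)
  show ?case
  proof (cases "Yb lam h L (shiftw (?j * (2 * L)) \<omega>) \<ge> \<theta>")
    case True
    let ?A = "Zr lam h (2 * (g * L)) ?w"
    let ?B = "Zr lam h (2 * L) (shiftw (2 * (g * L)) ?w)"
    let ?C = "Zr lam h (2 * (r * L)) (shiftw (2 * L) (shiftw (2 * (g * L)) ?w))"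
    have e1: "2 * ((g + Suc r) * L) = 2 * (g * L) + (2 * L + 2 * (r * L))" by (simp add: algebra_simps)
    have sh1: "shiftw (2 * (g * L)) ?w = shiftw (?j * (2 * L)) \<omega>" by (simp add: algebra_simps)
    have sh2: "shiftw (2 * L) (shiftw (2 * (g * L)) ?w) = shiftw (Suc ?j * (2 * L)) \<omega>" by (simp add: algebra_simps)
    have "Zr lam h (2 * ((g + Suc r) * L)) ?w \<ge> ?A * Zr lam h (2 * L + 2 * (r * L)) (shiftw (2 * (g * L)) ?w)"
      unfolding e1 by (rule Zr_super)
    moreover have "Zr lam h (2 * L + 2 * (r * L)) (shiftw (2 * (g * L)) ?w) \<ge> ?B * ?C"
      by (rule Zr_super)
    moreover have "?A > 0" "?B > 0" "?C > 0" using Zr_pos by auto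
    ultimately have Z1: "Zr lam h (2 * ((g + Suc r) * L)) ?w \<ge> ?A * (?B * ?C)"
      by (meson less_le mult_left_mono order.trans)
    have pos: "?A * (?B * ?C) > 0" using \<open>?A > 0\<close> \<open>?B > 0\<close> \<open>?C > 0\<close> by simp
    have "ln (Zr lam h (2 * ((g + Suc r) * L)) ?w) \<ge> ln (?A * (?B * ?C))"
      using Z1 pos by (subst ln_le_cancel_iff) auto
    also have "ln (?A * (?B * ?C)) = ln ?A + ln ?B + ln ?C"
      using \<open>?A > 0\<close> \<open>?B > 0\<close> \<open>?C > 0\<close> by (simp add: ln_mult_pos)
    finally have L1: "ln (Zr lam h (2 * ((g + Suc r) * L)) ?w) \<ge> ln ?A + ln ?B + ln ?C" .
    have LA: "ln ?A \<ge> - 3/2 * real (g * L) / a - ca a"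
      by (rule ln_Zr_gap[OF a])
    have "?B \<ge> kap L * exp (Yb lam h L (shiftw (?j * (2 * L)) \<omega>))"
      unfolding sh1 Yb_def by (rule Zr_ge_kap_neg)
    then have "ln ?B \<ge> ln (kap L * exp (Yb lam h L (shiftw (?j * (2 * L)) \<omega>)))"
      using kap_pos[of L] \<open>?B > 0\<close> by (subst ln_le_cancel_iff) auto
    then have LB: "ln ?B \<ge> ln (kap L) + Yb lam h L (shiftw (?j * (2 * L)) \<omega>)"
      using kap_pos[of L] by (simp add: ln_mult_pos)
    have LC: "ln ?C \<ge> (\<Sum>i\<in>{Suc ?j..<Suc ?j + r}. ?P i) - ca a"
      using Suc.IH[of 0 "Suc ?j"] unfolding sh2 by simp
    have Pj: "?P ?j = Yb lam h L (shiftw (?j * (2 * L)) \<omega>) + ln (kap L) - ca a"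
      using True by (simp add: phi_def)
    show ?thesis unfolding sumsplit using L1 LA LB LC Pj by linarith
  next
    case False
    have Pj: "?P ?j = - 3/2 * real L / a" using False by (simp add: phi_def)
    have "g + Suc r = Suc g + r" by simp
    then have "ln (Zr lam h (2 * ((g + Suc r) * L)) ?w) \<ge> - 3/2 * real (Suc g * L) / a + (\<Sum>i\<in>{s + Suc g..<s + Suc g + r}. ?P i) - ca a"
      using Suc.IH[of "Suc g" s] by simp
    moreover have "- 3/2 * real (Suc g * L) / a = - 3/2 * real (g * L) / a + ?P ?j"
      unfolding Pj using a by (simp add: field_simps)
    moreover have "s + Suc g = Suc ?j" "s + Suc g + r = Suc ?j + r" by simp_all
    ultimately show ?thesis unfolding sumsplit by simp
  qed
qed

lemma strategy:
  assumes "a > 0"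
  shows "ln (Zr lam h (2 * (J * L)) \<omega>) \<ge> (\<Sum>i<J. phi lam h L \<theta> a (shiftw (i * (2 * L)) \<omega>)) - ca a"
  using strategy_aux[OF assms, where s=0 and g=0 and r=J and lam=lam and h=h and L=L and \<omega>=\<omega> and \<theta>=\<theta>]
  by (simp add: lessThan_atLeast0)

context
  fixes \<mu> :: "real measure"
  assumes P: "prob_space \<mu>" and S: "sets \<mu> = sets borel"
begin

lemma D_prob: "prob_space (disorder \<mu>)"
  unfolding disorder_def by (intro prob_space_PiM P)

lemma comp_meas[measurable]: "(\<lambda>\<omega>. \<omega> n) \<in> borel_measurable (disorder \<mu>)"
proof -
  have "(\<lambda>\<omega>. \<omega> n) \<in> measurable (disorder \<mu>) \<mu>"
    unfolding disorder_def by (rule measurable_component_singleton) simp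
  then show ?thesis using measurable_cong_sets[OF refl S] by blast
qed

lemma shiftw_eq: "shiftw s = (\<lambda>\<omega> n. \<omega> (n + s))"
  by (simp add: shiftw_def fun_eq_iff)

lemma shift_meas[measurable]: "shiftw s \<in> measurable (disorder \<mu>) (disorder \<mu>)"
proof -
  have "(\<lambda>\<omega>. \<lambda>n\<in>UNIV. \<omega> (n + s)) \<in> measurable (disorder \<mu>) (disorder \<mu>)"
    unfolding disorder_def by (intro measurable_restrict measurable_component_singleton) auto
  then show ?thesis by (simp add: shiftw_eq restrict_UNIV)
qed

lemma distr_shift: "distr (disorder \<mu>) (disorder \<mu>) (shiftw s) = disorder \<mu>"
proof -
  have "distr (PiM UNIV (\<lambda>_. \<mu>)) (PiM UNIV (\<lambda>i. (\<lambda>_. \<mu>) ((\<lambda>n. n + s) i))) (\<lambda>\<omega>. \<lambda>n\<in>UNIV. \<omega> ((\<lambda>n. n + s) n))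
      = PiM UNIV (\<lambda>i. (\<lambda>_. \<mu>) ((\<lambda>n. n + s) i))"
    by (rule distr_PiM_reindex) (auto simp: P inj_on_def)
  then show ?thesis by (simp add: disorder_def shiftw_eq restrict_UNIV)
qed

lemma integral_shift:
  fixes F :: "(nat \<Rightarrow> real) \<Rightarrow> real"
  assumes [measurable]: "F \<in> borel_measurable (disorder \<mu>)"
  shows "(\<integral>\<omega>. F (shiftw s \<omega>) \<partial>disorder \<mu>) = (\<integral>\<omega>. F \<omega> \<partial>disorder \<mu>)"
  using integral_distr[OF shift_meas[of s] assms] distr_shift[of s] by simp

lemma integrable_shift:
  fixes F :: "(nat \<Rightarrow> real) \<Rightarrow> real"
  assumes [measurable]: "F \<in> borel_measurable (disorder \<mu>)" and "integrable (disorder \<mu>) F"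
  shows "integrable (disorder \<mu>) (\<lambda>\<omega>. F (shiftw s \<omega>))"
  using integrable_distr_eq[OF shift_meas[of s] assms(1)] distr_shift[of s] assms(2) by simp

lemma prod_integral:
  fixes g :: "real \<Rightarrow> real"
  assumes J: "finite J" and g: "integrable \<mu> g"
  shows "integrable (disorder \<mu>) (\<lambda>\<omega>. \<Prod>i\<in>J. g (\<omega> i))"
    and "(\<integral>\<omega>. (\<Prod>i\<in>J. g (\<omega> i)) \<partial>disorder \<mu>) = (\<integral>x. g x \<partial>\<mu>) ^ card J"
proof -
  interpret psf: product_sigma_finite "\<lambda>_. \<mu>"
    unfolding product_sigma_finite_def using P prob_space_imp_sigma_finite by blast
  have gm[measurable]: "g \<in> borel_measurable \<mu>" using g by auto
  have d: "distr (disorder \<mu>) (PiM J (\<lambda>_. \<mu>)) (\<lambda>\<omega>. \<lambda>n\<in>J. \<omega> n) = PiM J (\<lambda>_. \<mu>)"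
    unfolding disorder_def using distr_PiM_reindex[of UNIV "\<lambda>_. \<mu>" "\<lambda>n. n" J] P by simp
  have rm: "(\<lambda>\<omega>. \<lambda>n\<in>J. \<omega> n) \<in> measurable (disorder \<mu>) (PiM J (\<lambda>_. \<mu>))"
    unfolding disorder_def by (intro measurable_restrict measurable_component_singleton) auto
  have Gm: "(\<lambda>x. \<Prod>i\<in>J. g (x i)) \<in> borel_measurable (PiM J (\<lambda>_. \<mu>))"
  proof (intro borel_measurable_prod)
    fix i assume "i \<in> J"
    then have "(\<lambda>x. x i) \<in> measurable (PiM J (\<lambda>_. \<mu>)) \<mu>"
      by (rule measurable_component_singleton)
    from measurable_compose[OF this gm] show "(\<lambda>x. g (x i)) \<in> borel_measurable (PiM J (\<lambda>_. \<mu>))" .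
  qed
  have eqf: "(\<lambda>\<omega>. \<Prod>i\<in>J. g ((\<lambda>n\<in>J. \<omega> n) i)) = (\<lambda>\<omega>. \<Prod>i\<in>J. g (\<omega> i))"
    by (intro ext prod.cong) auto
  have int1: "integrable (PiM J (\<lambda>_. \<mu>)) (\<lambda>x. \<Prod>i\<in>J. g (x i))"
    by (rule psf.product_integrable_prod[OF J]) (use g in auto)
  show "integrable (disorder \<mu>) (\<lambda>\<omega>. \<Prod>i\<in>J. g (\<omega> i))"
    using integrable_distr_eq[OF rm Gm] int1 d eqf by simp
  have "(\<integral>\<omega>. (\<Prod>i\<in>J. g (\<omega> i)) \<partial>disorder \<mu>) = (\<integral>x. (\<Prod>i\<in>J. g (x i)) \<partial>PiM J (\<lambda>_. \<mu>))"
    using integral_distr[OF rm Gm] d eqf by simp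
  also have "\<dots> = (\<Prod>i\<in>J. \<integral>x. g x \<partial>\<mu>)"
    by (rule psf.product_integral_prod[OF J]) (use g in auto)
  finally show "(\<integral>\<omega>. (\<Prod>i\<in>J. g (\<omega> i)) \<partial>disorder \<mu>) = (\<integral>x. g x \<partial>\<mu>) ^ card J" by simp
qed

lemma integrable_comp:
  fixes g :: "real \<Rightarrow> real"
  assumes g: "integrable \<mu> g"
  shows "integrable (disorder \<mu>) (\<lambda>\<omega>. g (\<omega> n))"
    and "(\<integral>\<omega>. g (\<omega> n) \<partial>disorder \<mu>) = (\<integral>x. g x \<partial>\<mu>)"
  using prod_integral[of "{n}" g] g by simp_all

lemma Zr_meas[measurable]: "(\<lambda>\<omega>. Zr lam h N \<omega>) \<in> borel_measurable (disorder \<mu>)"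
  unfolding Zr_def En_def by measurable

lemma Z_meas[measurable]: "(\<lambda>\<omega>. copolymer_Z lam h N \<omega>) \<in> borel_measurable (disorder \<mu>)"
  unfolding copolymer_Z_def by measurable

end

lemma super_mult:
  fixes b :: "nat \<Rightarrow> real"
  assumes sup: "\<And>k j. b (k + j) \<ge> b k + b j"
  shows "b (q * m + r) \<ge> real q * b m + b r"
proof (induction q)
  case 0 then show ?case by simp
next
  case (Suc q)
  have "b (Suc q * m + r) = b (m + (q * m + r))" by (simp add: algebra_simps)
  also have "\<dots> \<ge> b m + b (q * m + r)" by (rule sup)
  finally show ?case using Suc by (simp add: algebra_simps)
qed

lemma fekete:
  fixes b :: "nat \<Rightarrow> real"
  assumes sup: "\<And>k j. b (k + j) \<ge> b k + b j" and bd: "\<And>k. b k \<le> C * real k"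
  shows "(\<lambda>k. b k / real k) \<longlonglongrightarrow> (SUP k\<in>{1..}. b k / real k)"
    and "\<And>k. k \<ge> 1 \<Longrightarrow> b k / real k \<le> (SUP k\<in>{1..}. b k / real k)"
proof -
  let ?L = "SUP k\<in>{1..}. b k / real k"
  have bdd: "bdd_above ((\<lambda>k. b k / real k) ` {1..})"
  proof (rule bdd_aboveI2)
    fix k :: nat assume "k \<in> {1..}"
    then show "b k / real k \<le> C" using bd[of k] by (simp add: divide_le_eq mult.commute)
  qed
  show up: "\<And>k. k \<ge> 1 \<Longrightarrow> b k / real k \<le> ?L"
    by (rule cSUP_upper[OF _ bdd]) simp
  show "(\<lambda>k. b k / real k) \<longlonglongrightarrow> ?L"
  proof (rule LIMSEQ_I)
    fix e :: real assume e: "e > 0"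
    have "?L - e/2 < ?L" using e by simp
    moreover have ne: "{1::nat..} \<noteq> {}" by auto
    ultimately have "\<exists>x\<in>{1..}. ?L - e/2 < b x / real x"
      using less_cSUP_iff[OF ne bdd] by blast
    then obtain m where m: "m \<in> {1..}" "?L - e/2 < b m / real m" by blast
    have m1: "m \<ge> 1" using m by simp
    define B where "B = (\<Sum>r<m. \<bar>b r\<bar>)"
    have Br: "b r \<ge> - B" if "r < m" for r
    proof -
      have "\<bar>b r\<bar> \<le> B" unfolding B_def using that by (intro member_le_sum) auto
      then show ?thesis by linarith
    qed
    define D where "D = \<bar>b m\<bar> + B"
    have D0: "D \<ge> 0" unfolding D_def B_def by (simp add: sum_nonneg)
    obtain N0 :: nat where N0: "real N0 > 2 * D / e" using reals_Archimedean2 by blast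
    show "\<exists>no. \<forall>k\<ge>no. norm (b k / real k - ?L) < e"
    proof (intro exI allI impI)
      fix k assume k: "k \<ge> max 1 (Suc N0)"
      then have k1: "k \<ge> 1" and kN: "real k > 2 * D / e" using N0 by auto
      have kpos: "real k > 0" using k1 by simp
      define q where "q = k div m"
      define r where "r = k mod m"
      have kqr: "k = q * m + r" unfolding q_def r_def by simp
      have rm: "r < m" unfolding r_def using m1 by simp
      have "b k \<ge> real q * b m + b r" unfolding kqr by (rule super_mult[OF sup])
      then have bk: "b k \<ge> real q * b m - B" using Br[OF rm] by linarith
      have kr: "real k = real q * real m + real r"
        using arg_cong[OF kqr, of real] by simp
      have "real r < real m" using rm by simp
      then have qm: "real q * real m \<le> real k" "real q * real m \<ge> real k - real m"
        using kr by linarith+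
      have "real q * b m \<ge> b m / real m * real k - \<bar>b m\<bar>"
      proof (cases "b m \<ge> 0")
        case True
        have "real q * b m = b m / real m * (real q * real m)" using m1 by (simp add: field_simps)
        also have "\<dots> \<ge> b m / real m * (real k - real m)"
          using True qm(2) m1 by (intro mult_left_mono) auto
        also have "b m / real m * (real k - real m) = b m / real m * real k - b m" using m1 by (simp add: field_simps)
        finally show ?thesis using True by simp
      next
        case False
        have "real q * b m = b m / real m * (real q * real m)" using m1 by (simp add: field_simps)
        also have "\<dots> \<ge> b m / real m * real k"
          using False qm(1) m1 by (intro mult_left_mono_neg) (auto simp: divide_nonpos_pos)
        finally show ?thesis by simp
      qed
      then have "b k \<ge> b m / real m * real k - D" using bk unfolding D_def by linarith
      then have "(b m / real m * real k - D) / real k \<le> b k / real k"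
        using kpos by (intro divide_right_mono) auto
      moreover have "(b m / real m * real k - D) / real k = b m / real m - D / real k"
        using kpos by (simp add: diff_divide_distrib)
      ultimately have "b k / real k \<ge> b m / real m - D / real k" by simp
      moreover have "D / real k < e / 2"
      proof -
        have "2 * D < e * real k" using kN e by (simp add: field_simps)
        then show ?thesis using kpos by (simp add: field_simps)
      qed
      ultimately have lo: "b k / real k > ?L - e" using m(2) by linarith
      have hi: "b k / real k \<le> ?L" using up[OF k1] .
      show "norm (b k / real k - ?L) < e" using lo hi by simp
    qed
  qed
qed

lemma integrable_sandwich:
  fixes f g :: "'a \<Rightarrow> real"
  assumes "finite_measure M" "integrable M g" "f \<in> borel_measurable M"
    and "\<And>x. a \<le> f x" "\<And>x. f x \<le> g x"
  shows "integrable M f"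
proof -
  interpret finite_measure M by fact
  have "integrable M (\<lambda>x. \<bar>a\<bar> + \<bar>g x\<bar>)" using assms(2) by auto
  then show ?thesis
  proof (rule Bochner_Integration.integrable_bound)
    show "f \<in> borel_measurable M" by fact
    show "AE x in M. norm (f x) \<le> norm (\<bar>a\<bar> + \<bar>g x\<bar>)"
      using assms(4,5) by (intro AE_I2) (smt (verit, best) real_norm_def)
  qed
qed

context
  fixes \<mu> :: "real measure" and lam h :: real
  assumes P: "prob_space \<mu>" and S: "sets \<mu> = sets borel"
    and I: "\<And>\<alpha>. integrable \<mu> (\<lambda>x. exp (\<alpha> * x))"
    and lam: "lam > 0"
begin

interpretation mu: prob_space \<mu> by (rule P)
interpretation D: prob_space "disorder \<mu>" by (rule D_prob[OF P S])

lemma id_meas[measurable]: "(\<lambda>x. x) \<in> borel_measurable \<mu>"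
  by (fact measurable_ident_sets[OF S])

lemma int_x: "integrable \<mu> (\<lambda>x. x)"
proof -
  have "integrable \<mu> (\<lambda>x. exp (1 * x) + exp ((-1) * x))" using I[of 1] I[of "-1"] by auto
  then show ?thesis
  proof (rule Bochner_Integration.integrable_bound)
    show "AE x in \<mu>. norm x \<le> norm (exp (1 * x) + exp ((-1) * x))"
    proof (intro AE_I2)
      fix x :: real
      have "\<bar>x\<bar> \<le> exp \<bar>x\<bar>" using exp_ge_add_one_self[of "\<bar>x\<bar>"] by linarith
      also have "exp \<bar>x\<bar> \<le> exp x + exp (-x)" by (cases "x \<ge> 0") auto
      finally show "norm x \<le> norm (exp (1 * x) + exp ((-1) * x))" by simp
    qed
  qed simp
qed

lemma int_abs: "integrable \<mu> (\<lambda>x. \<bar>x + h\<bar>)"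
  using int_x by auto

lemma int_xh: "integrable \<mu> (\<lambda>x. x + h)"
  using int_x by auto

lemma int_exp: "integrable \<mu> (\<lambda>x. exp (g * (x + h)))"
proof -
  have "integrable \<mu> (\<lambda>x. exp (g * h) * exp (g * x))" using I[of g] by auto
  moreover have "(\<lambda>x. exp (g * h) * exp (g * x)) = (\<lambda>x. exp (g * (x + h)))"
    by (simp add: fun_eq_iff distrib_left exp_add[symmetric] add.commute)
  ultimately show ?thesis by simp
qed

lemma int_exp_val: "(\<integral>x. exp (g * (x + h)) \<partial>\<mu>) = exp (g * h) * mgf \<mu> g"
proof -
  have "(\<lambda>x. exp (g * (x + h))) = (\<lambda>x. exp (g * h) * exp (g * x))"
    by (simp add: fun_eq_iff distrib_left exp_add[symmetric] add.commute)
  then show ?thesis unfolding mgf_def by simp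
qed

lemma mgf_ge1: assumes E0: "(\<integral>x. x \<partial>\<mu>) = 0" shows "mgf \<mu> g \<ge> 1"
proof -
  have "(\<integral>x. 1 + g * x \<partial>\<mu>) \<le> (\<integral>x. exp (g * x) \<partial>\<mu>)"
    by (intro integral_mono) (use int_x I in \<open>auto intro: exp_ge_add_one_self\<close>)
  moreover have "(\<integral>x. 1 + g * x \<partial>\<mu>) = 1"
    using int_x E0 by (simp add: mu.prob_space)
  ultimately show ?thesis unfolding mgf_def by simp
qed

definition Ah where "Ah = (\<integral>x. \<bar>x + h\<bar> \<partial>\<mu>)"

lemma int_sumabs: "integrable (disorder \<mu>) (\<lambda>\<omega>. \<Sum>n=1..N. \<bar>\<omega> n + h\<bar>)"
  using integrable_comp(1)[OF P S int_abs] by auto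

lemma integral_sumabs: "(\<integral>\<omega>. (\<Sum>n=1..N. \<bar>\<omega> n + h\<bar>) \<partial>disorder \<mu>) = real N * Ah"
proof -
  have "(\<integral>\<omega>. (\<Sum>n=1..N. \<bar>\<omega> n + h\<bar>) \<partial>disorder \<mu>) = (\<Sum>n=1..N. \<integral>\<omega>. \<bar>\<omega> n + h\<bar> \<partial>disorder \<mu>)"
    using Bochner_Integration.integral_sum[where I="{1..N}" and M="disorder \<mu>" and f="\<lambda>n \<omega>. \<bar>\<omega> n + h\<bar>"] integrable_comp(1)[OF P S int_abs] by simp
  also have "\<dots> = (\<Sum>n=1..N. Ah)" unfolding Ah_def using integrable_comp(2)[OF P S int_abs] by simp
  finally show ?thesis by simp
qed

lemma lnZr_bounds: "ln (kap k) \<le> ln (Zr lam h (2*k) \<omega>)"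
    "ln (Zr lam h (2*k) \<omega>) \<le> ln (copolymer_Z lam h (2*k) \<omega>)"
    "ln (copolymer_Z lam h (2*k) \<omega>) \<le> 2 * lam * (\<Sum>n=1..2*k. \<bar>\<omega> n + h\<bar>)"
proof -
  have a: "kap k > 0" "Zr lam h (2*k) \<omega> > 0" by (simp_all add: kap_pos Zr_pos)
  have z: "copolymer_Z lam h (2*k) \<omega> > 0" using a(2) Zr_le_Z[of lam h "2*k" \<omega>] by linarith
  show "ln (kap k) \<le> ln (Zr lam h (2*k) \<omega>)" using a Zr_ge_kap[of k lam h \<omega>] by simp
  show "ln (Zr lam h (2*k) \<omega>) \<le> ln (copolymer_Z lam h (2*k) \<omega>)" using a z Zr_le_Z[of lam h "2*k" \<omega>] by simp
  have "ln (copolymer_Z lam h (2*k) \<omega>) \<le> ln (exp (2 * lam * (\<Sum>n=1..2*k. \<bar>\<omega> n + h\<bar>)))"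
    using z Z_upper[of lam h "2*k" \<omega>] lam by (subst ln_le_cancel_iff) auto
  then show "ln (copolymer_Z lam h (2*k) \<omega>) \<le> 2 * lam * (\<Sum>n=1..2*k. \<bar>\<omega> n + h\<bar>)" by simp
qed

lemma int_lnZ: "integrable (disorder \<mu>) (\<lambda>\<omega>. ln (copolymer_Z lam h (2*k) \<omega>))"
proof (rule integrable_sandwich[where a = "ln (kap k)" and g = "\<lambda>\<omega>. 2 * lam * (\<Sum>n=1..2*k. \<bar>\<omega> n + h\<bar>)"])
  show "finite_measure (disorder \<mu>)" by (rule D.finite_measure_axioms)
  show "integrable (disorder \<mu>) (\<lambda>\<omega>. 2 * lam * (\<Sum>n=1..2*k. \<bar>\<omega> n + h\<bar>))" using int_sumabs by auto
  show "(\<lambda>\<omega>. ln (copolymer_Z lam h (2*k) \<omega>)) \<in> borel_measurable (disorder \<mu>)"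
    using Z_meas[OF P S] by measurable
  fix \<omega>
  show "ln (kap k) \<le> ln (copolymer_Z lam h (2*k) \<omega>)" using order.trans[OF lnZr_bounds(1) lnZr_bounds(2)] .
  show "ln (copolymer_Z lam h (2*k) \<omega>) \<le> 2 * lam * (\<Sum>n=1..2*k. \<bar>\<omega> n + h\<bar>)" by (rule lnZr_bounds(3))
qed

lemma int_lnZr: "integrable (disorder \<mu>) (\<lambda>\<omega>. ln (Zr lam h (2*k) \<omega>))"
proof (rule integrable_sandwich[where a = "ln (kap k)" and g = "\<lambda>\<omega>. 2 * lam * (\<Sum>n=1..2*k. \<bar>\<omega> n + h\<bar>)"])
  show "finite_measure (disorder \<mu>)" by (rule D.finite_measure_axioms)
  show "integrable (disorder \<mu>) (\<lambda>\<omega>. 2 * lam * (\<Sum>n=1..2*k. \<bar>\<omega> n + h\<bar>))" using int_sumabs by auto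
  show "(\<lambda>\<omega>. ln (Zr lam h (2*k) \<omega>)) \<in> borel_measurable (disorder \<mu>)"
    using Zr_meas[OF P S] by measurable
  fix \<omega>
  show "ln (kap k) \<le> ln (Zr lam h (2*k) \<omega>)" by (rule lnZr_bounds(1))
  show "ln (Zr lam h (2*k) \<omega>) \<le> 2 * lam * (\<Sum>n=1..2*k. \<bar>\<omega> n + h\<bar>)" using order.trans[OF lnZr_bounds(2) lnZr_bounds(3)] .
qed

definition bb where "bb k = (\<integral>\<omega>. ln (Zr lam h (2*k) \<omega>) \<partial>disorder \<mu>)"
definition cc where "cc k = (\<integral>\<omega>. ln (copolymer_Z lam h (2*k) \<omega>) \<partial>disorder \<mu>)"

lemma bb_le_cc: "bb k \<le> cc k"
  unfolding bb_def cc_def by (intro integral_mono int_lnZr int_lnZ lnZr_bounds(2))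

lemma cc_upper: "cc k \<le> (4 * lam * Ah) * real k"
proof -
  have "cc k \<le> (\<integral>\<omega>. 2 * lam * (\<Sum>n=1..2*k. \<bar>\<omega> n + h\<bar>) \<partial>disorder \<mu>)"
    unfolding cc_def by (intro integral_mono int_lnZ lnZr_bounds(3)) (use int_sumabs in auto)
  also have "\<dots> = 2 * lam * (real (2 * k) * Ah)" using integral_sumabs by simp
  finally show ?thesis by (simp add: mult_ac)
qed

lemma cc_le_bb: "cc k \<le> bb k + ln (2 * (real k + 1) * sqrt (real k + 1) * (2 * real k + 1))"
proof -
  let ?K = "2 * (real k + 1) * sqrt (real k + 1) * (2 * real k + 1)"
  have Kp: "?K > 0" by (simp add: add_pos_nonneg)
  have pw: "ln (copolymer_Z lam h (2*k) \<omega>) \<le> ln (Zr lam h (2*k) \<omega>) + ln ?K" for \<omega>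
  proof -
    have z: "Zr lam h (2*k) \<omega> > 0" by (rule Zr_pos)
    have zz: "copolymer_Z lam h (2*k) \<omega> > 0" using z Zr_le_Z[of lam h "2*k" \<omega>] by linarith
    have "ln (copolymer_Z lam h (2*k) \<omega>) \<le> ln (?K * Zr lam h (2*k) \<omega>)"
      using Z_le_Zr[of lam h k \<omega>] z zz Kp by (subst ln_le_cancel_iff) (auto simp: mult_ac)
    also have "\<dots> = ln ?K + ln (Zr lam h (2*k) \<omega>)" using z Kp by (simp add: ln_mult_pos)
    finally show ?thesis by simp
  qed
  have "cc k \<le> (\<integral>\<omega>. ln (Zr lam h (2*k) \<omega>) + ln ?K \<partial>disorder \<mu>)"
    unfolding cc_def by (intro integral_mono int_lnZ pw) (use int_lnZr in auto)
  also have "\<dots> = bb k + ln ?K" unfolding bb_def using int_lnZr by (simp add: D.prob_space)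
  finally show ?thesis .
qed

lemma bb_super: "bb (k + j) \<ge> bb k + bb j"
proof -
  have Fm[measurable]: "(\<lambda>\<omega>. ln (Zr lam h (2*j) \<omega>)) \<in> borel_measurable (disorder \<mu>)"
    using Zr_meas[OF P S] by measurable
  have pw: "ln (Zr lam h (2*k) \<omega>) + ln (Zr lam h (2*j) (shiftw (2*k) \<omega>)) \<le> ln (Zr lam h (2*(k+j)) \<omega>)" for \<omega>
  proof -
    have a: "Zr lam h (2*k) \<omega> > 0" "Zr lam h (2*j) (shiftw (2*k) \<omega>) > 0" by (simp_all add: Zr_pos)
    have b: "Zr lam h (2*k + 2*j) \<omega> \<ge> Zr lam h (2*k) \<omega> * Zr lam h (2*j) (shiftw (2*k) \<omega>)"
      by (rule Zr_super)
    have c: "0 < Zr lam h (2*k + 2*j) \<omega>" using Zr_pos[of lam h "k+j" \<omega>] by (simp add: distrib_left)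
    have "ln (Zr lam h (2*k) \<omega>) + ln (Zr lam h (2*j) (shiftw (2*k) \<omega>))
        = ln (Zr lam h (2*k) \<omega> * Zr lam h (2*j) (shiftw (2*k) \<omega>))" using a by (simp add: ln_mult_pos)
    also have "\<dots> \<le> ln (Zr lam h (2*k + 2*j) \<omega>)" using a b c by (subst ln_le_cancel_iff) auto
    finally show ?thesis by (simp add: distrib_left)
  qed
  have i2: "integrable (disorder \<mu>) (\<lambda>\<omega>. ln (Zr lam h (2*j) (shiftw (2*k) \<omega>)))"
    by (rule integrable_shift[OF P S Fm int_lnZr])
  have "bb k + bb j = (\<integral>\<omega>. ln (Zr lam h (2*k) \<omega>) + ln (Zr lam h (2*j) (shiftw (2*k) \<omega>)) \<partial>disorder \<mu>)"
    unfolding bb_def using int_lnZr i2 integral_shift[OF P S Fm, of "2*k"] by simp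
  also have "\<dots> \<le> bb (k + j)"
    unfolding bb_def by (intro integral_mono pw int_lnZr) (use int_lnZr i2 in auto)
  finally show ?thesis .
qed

lemma final_step:
  assumes k0: "k0 \<ge> 1" "bb k0 > 0"
  shows "free_energy \<mu> lam h > 0"
proof -
  let ?L = "SUP k\<in>{1..}. bb k / real k"
  have fk: "(\<lambda>k. bb k / real k) \<longlonglongrightarrow> ?L" "\<And>k. k \<ge> 1 \<Longrightarrow> bb k / real k \<le> ?L"
    using fekete[of bb "4 * lam * Ah"] bb_super order.trans[OF bb_le_cc cc_upper] by auto
  have Lpos: "?L > 0" using fk(2)[OF k0(1)] k0 by (smt (verit) divide_pos_pos of_nat_0_less_iff less_le_trans zero_less_one)
  let ?K = "\<lambda>k::nat. ln (2 * (real k + 1) * sqrt (real k + 1) * (2 * real k + 1))"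
  have lo: "(\<lambda>k. bb k / real (2 * k)) \<longlonglongrightarrow> ?L / 2"
  proof -
    have "(\<lambda>k. (bb k / real k) / 2) \<longlonglongrightarrow> ?L / 2" by (intro tendsto_divide fk(1)) auto
    moreover have "(\<lambda>k. (bb k / real k) / 2) = (\<lambda>k. bb k / real (2 * k))" by (simp add: fun_eq_iff)
    ultimately show ?thesis by simp
  qed
  have Kz: "(\<lambda>k. ?K k / real (2 * k)) \<longlonglongrightarrow> 0" by real_asymp
  have hi: "(\<lambda>k. (bb k + ?K k) / real (2 * k)) \<longlonglongrightarrow> ?L / 2"
    using tendsto_add[OF lo Kz] by (simp add: add_divide_distrib)
  have ev1: "\<forall>\<^sub>F k in sequentially. bb k / real (2 * k) \<le> cc k / real (2 * k)"
    by (intro always_eventually allI divide_right_mono bb_le_cc) auto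
  have ev2: "\<forall>\<^sub>F k in sequentially. cc k / real (2 * k) \<le> (bb k + ?K k) / real (2 * k)"
    by (intro always_eventually allI divide_right_mono cc_le_bb) auto
  have lim: "(\<lambda>k. cc k / real (2 * k)) \<longlonglongrightarrow> ?L / 2"
    by (rule tendsto_sandwich[OF ev1 ev2 lo hi])
  have "free_energy \<mu> lam h = lim (\<lambda>k. cc k / real (2 * k))"
    unfolding free_energy_def cc_def ..
  also have "\<dots> = ?L / 2" using lim by (rule limI)
  finally show ?thesis using Lpos by simp
qed

lemma Yb_meas[measurable]: "Yb lam h L \<in> borel_measurable (disorder \<mu>)"
  unfolding Yb_def using comp_meas[OF P S] by measurable

lemma int_Yb: "integrable (disorder \<mu>) (Yb lam h L)"
proof -
  have "integrable (disorder \<mu>) (\<lambda>\<omega>. -2 * lam * (\<Sum>n=1..2*L. \<omega> n + h))"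
    using integrable_comp(1)[OF P S int_xh] by auto
  then show ?thesis unfolding Yb_def .
qed

lemma exp_Yb:
  fixes t :: real
  shows "integrable (disorder \<mu>) (\<lambda>\<omega>. exp (t * Yb lam h L \<omega>))"
    "(\<integral>\<omega>. exp (t * Yb lam h L \<omega>) \<partial>disorder \<mu>) = (exp ((-2*lam*t) * h) * mgf \<mu> (-2*lam*t)) ^ (2*L)"
proof -
  have eq: "(\<lambda>\<omega>. exp (t * Yb lam h L \<omega>)) = (\<lambda>\<omega>. \<Prod>n\<in>{1..2*L}. exp ((-2*lam*t) * (\<omega> n + h)))"
    unfolding Yb_def by (simp add: fun_eq_iff exp_sum[symmetric] sum_distrib_left mult_ac)
  show "integrable (disorder \<mu>) (\<lambda>\<omega>. exp (t * Yb lam h L \<omega>))"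
    unfolding eq by (rule prod_integral(1)[OF P S, OF _ int_exp]) simp
  show "(\<integral>\<omega>. exp (t * Yb lam h L \<omega>) \<partial>disorder \<mu>) = (exp ((-2*lam*t) * h) * mgf \<mu> (-2*lam*t)) ^ (2*L)"
  proof -
    have A: "(\<integral>\<omega>. (\<Prod>n\<in>{1..2*L}. exp ((-2*lam*t) * (\<omega> n + h))) \<partial>disorder \<mu>)
        = (\<integral>x. exp ((-2*lam*t) * (x + h)) \<partial>\<mu>) ^ card {1..2*L}"
      by (rule prod_integral(2)[OF P S _ int_exp]) simp
    have B: "card {1..2*L} = 2*L" by simp
    show ?thesis unfolding eq A B int_exp_val ..
  qed
qed

lemma layer_ineq:
  fixes y \<beta> :: real
  assumes b: "\<beta> > 0"
  shows "exp (\<beta> * y) \<le> 1 + (\<Sum>i<n. exp (\<beta> * (real i + 1)) * (if y \<ge> real i then 1 else 0)) + exp (2 * \<beta> * y - \<beta> * real n)"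
proof -
  have S0: "0 \<le> (\<Sum>i<n. exp (\<beta> * (real i + 1)) * (if y \<ge> real i then 1 else (0::real)))"
    by (intro sum_nonneg) auto
  have E0: "0 \<le> exp (2 * \<beta> * y - \<beta> * real n)" by simp
  show ?thesis
  proof (cases "y < 0")
    case True
    have "\<beta> * y < 0" using b True by (rule mult_pos_neg)
    then have "exp (\<beta> * y) \<le> 1" by simp
    then show ?thesis using S0 E0 by linarith
  next
    case False
    show ?thesis
    proof (cases "y \<ge> real n")
      case True
      then have "\<beta> * y \<le> 2 * \<beta> * y - \<beta> * real n" using b by (simp add: algebra_simps mult_left_mono)
      then have "exp (\<beta> * y) \<le> exp (2 * \<beta> * y - \<beta> * real n)" by simp
      then show ?thesis using S0 by linarith
    next
      case False2: False
      define i where "i = nat \<lfloor>y\<rfloor>"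
      have yi: "real i \<le> y" "y < real i + 1" using \<open>\<not> y < 0\<close> unfolding i_def by linarith+
      have iN: "i < n" using yi False2 by linarith
      have "exp (\<beta> * y) \<le> exp (\<beta> * (real i + 1))" using yi b by simp
      also have "\<dots> = exp (\<beta> * (real i + 1)) * (if y \<ge> real i then 1 else 0)" using yi by simp
      also have "\<dots> \<le> (\<Sum>i<n. exp (\<beta> * (real i + 1)) * (if y \<ge> real i then 1 else (0::real)))"
        by (rule member_le_sum[of i "{..<n}" "\<lambda>i. exp (\<beta> * (real i + 1)) * (if y \<ge> real i then 1 else (0::real))"])
           (use iN in auto)
      finally show ?thesis using E0 by linarith
    qed
  qed
qed

definition pind :: "nat \<Rightarrow> real \<Rightarrow> real" where "pind L t = (\<integral>\<omega>. (if Yb lam h L \<omega> \<ge> t then 1 else (0::real)) \<partial>disorder \<mu>)"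

lemma int_ind: "integrable (disorder \<mu>) (\<lambda>\<omega>. if Yb lam h L \<omega> \<ge> t then 1 else (0::real))"
  by (rule integrable_sandwich[where a=0 and g="\<lambda>_. 1"]) (auto simp: D.finite_measure_axioms)

lemma pind_bounds: "0 \<le> pind L t" "pind L t \<le> 1"
proof -
  show "0 \<le> pind L t" unfolding pind_def by (intro integral_nonneg_AE) auto
  have "pind L t \<le> (\<integral>\<omega>. 1 \<partial>disorder \<mu>)" unfolding pind_def
    by (intro integral_mono int_ind) auto
  then show "pind L t \<le> 1" by (simp add: D.prob_space)
qed

lemma exists_level:
  assumes m1: "(exp ((-4*lam/3) * h) * mgf \<mu> (-4*lam/3)) ^ (2*L) > 2 + real n * exp (2/3 + c)"
    and m2: "(exp ((-8*lam/3) * h) * mgf \<mu> (-8*lam/3)) ^ (2*L) \<le> exp (2/3 * real n)"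
  shows "\<exists>i<n. pind L (real i) \<ge> exp (c - 2/3 * real i)"
proof (rule ccontr)
  assume "\<not> (\<exists>i<n. pind L (real i) \<ge> exp (c - 2/3 * real i))"
  then have lt: "\<And>i. i < n \<Longrightarrow> pind L (real i) < exp (c - 2/3 * real i)" by force
  let ?Y = "Yb lam h L"
  let ?R = "\<lambda>\<omega>. 1 + (\<Sum>i<n. exp (2/3 * (real i + 1)) * (if ?Y \<omega> \<ge> real i then 1 else 0)) + exp (2 * (2/3) * ?Y \<omega> - 2/3 * real n)"
  have e1: "(\<integral>\<omega>. exp (2/3 * ?Y \<omega>) \<partial>disorder \<mu>) = (exp ((-4*lam/3) * h) * mgf \<mu> (-4*lam/3)) ^ (2*L)"
    using exp_Yb(2)[of "2/3" L] by (simp add: field_simps)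
  have i2: "integrable (disorder \<mu>) (\<lambda>\<omega>. exp (4/3 * ?Y \<omega>))" by (rule exp_Yb(1))
  have e2: "(\<integral>\<omega>. exp (4/3 * ?Y \<omega>) \<partial>disorder \<mu>) = (exp ((-8*lam/3) * h) * mgf \<mu> (-8*lam/3)) ^ (2*L)"
    using exp_Yb(2)[of "4/3" L] by (simp add: field_simps)
  have i3: "integrable (disorder \<mu>) (\<lambda>\<omega>. exp (2 * (2/3) * ?Y \<omega> - 2/3 * real n))"
  proof -
    have "integrable (disorder \<mu>) (\<lambda>\<omega>. exp (- (2/3 * real n)) * exp (4/3 * ?Y \<omega>))" using i2 by auto
    moreover have "(\<lambda>\<omega>. exp (- (2/3 * real n)) * exp (4/3 * ?Y \<omega>)) = (\<lambda>\<omega>. exp (2 * (2/3) * ?Y \<omega> - 2/3 * real n))"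
      by (simp add: fun_eq_iff exp_add[symmetric])
    ultimately show ?thesis by metis
  qed
  have iR: "integrable (disorder \<mu>) ?R" using i3 int_ind by auto
  have "(exp ((-4*lam/3) * h) * mgf \<mu> (-4*lam/3)) ^ (2*L) \<le> (\<integral>\<omega>. ?R \<omega> \<partial>disorder \<mu>)"
    unfolding e1[symmetric] by (intro integral_mono exp_Yb(1) iR layer_ineq) auto
  also have "(\<integral>\<omega>. ?R \<omega> \<partial>disorder \<mu>) = 1 + (\<Sum>i<n. exp (2/3 * (real i + 1)) * pind L (real i))
      + exp (- (2/3 * real n)) * (exp ((-8*lam/3) * h) * mgf \<mu> (-8*lam/3)) ^ (2*L)"
  proof -
    have a: "(\<integral>\<omega>. exp (2 * (2/3) * ?Y \<omega> - 2/3 * real n) \<partial>disorder \<mu>) = exp (- (2/3 * real n)) * (\<integral>\<omega>. exp (4/3 * ?Y \<omega>) \<partial>disorder \<mu>)"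
    proof -
      have "(\<lambda>\<omega>. exp (2 * (2/3) * ?Y \<omega> - 2/3 * real n)) = (\<lambda>\<omega>. exp (- (2/3 * real n)) * exp (4/3 * ?Y \<omega>))"
        by (simp add: fun_eq_iff exp_add[symmetric])
      then show ?thesis by simp
    qed
    have b: "(\<integral>\<omega>. (\<Sum>i<n. exp (2/3 * (real i + 1)) * (if ?Y \<omega> \<ge> real i then 1 else 0)) \<partial>disorder \<mu>)
        = (\<Sum>i<n. exp (2/3 * (real i + 1)) * pind L (real i))"
      unfolding pind_def
      using Bochner_Integration.integral_sum[where I="{..<n}" and M="disorder \<mu>"
          and f="\<lambda>i \<omega>. exp (2/3 * (real i + 1)) * (if ?Y \<omega> \<ge> real i then 1 else (0::real))"] int_ind
      by simp
    show ?thesis using a b e2 i3 int_ind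
      by (subst Bochner_Integration.integral_add, (auto)[2])+ (simp add: D.prob_space)
  qed
  also have "\<dots> \<le> 1 + real n * exp (2/3 + c) + 1"
  proof -
    have "(\<Sum>i<n. exp (2/3 * (real i + 1)) * pind L (real i)) \<le> (\<Sum>i<n. exp (2/3 * (real i + 1)) * exp (c - 2/3 * real i))"
    proof (intro sum_mono mult_left_mono)
      fix i assume "i \<in> {..<n}"
      then show "pind L (real i) \<le> exp (c - 2/3 * real i)" using lt[of i] by simp
    qed simp
    also have "\<dots> = (\<Sum>i<n. exp (2/3 + c))" by (intro sum.cong refl) (simp add: exp_add[symmetric] algebra_simps)
    also have "\<dots> = real n * exp (2/3 + c)" by simp
    finally have s: "(\<Sum>i<n. exp (2/3 * (real i + 1)) * pind L (real i)) \<le> real n * exp (2/3 + c)" .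
    have "exp (- (2/3 * real n)) * (exp ((-8*lam/3) * h) * mgf \<mu> (-8*lam/3)) ^ (2*L) \<le> exp (- (2/3 * real n)) * exp (2/3 * real n)"
      by (intro mult_left_mono m2) auto
    also have "\<dots> = 1" by (simp add: exp_add[symmetric])
    finally show ?thesis using s by linarith
  qed
  finally show False using m1 by linarith
qed

lemma phi_meas[measurable]: "phi lam h L \<theta> a \<in> borel_measurable (disorder \<mu>)"
  unfolding phi_def using Yb_meas by measurable

lemma int_phi: "integrable (disorder \<mu>) (phi lam h L \<theta> a)"
proof (rule integrable_sandwich[where a = "min (\<theta> + ln (kap L) - ca a) (- 3/2 * real L / a)"
      and g = "\<lambda>\<omega>. \<bar>Yb lam h L \<omega>\<bar> + \<bar>ln (kap L) - ca a\<bar> + \<bar>- 3/2 * real L / a\<bar>"])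
  show "finite_measure (disorder \<mu>)" by (rule D.finite_measure_axioms)
  show "integrable (disorder \<mu>) (\<lambda>\<omega>. \<bar>Yb lam h L \<omega>\<bar> + \<bar>ln (kap L) - ca a\<bar> + \<bar>- 3/2 * real L / a\<bar>)"
    using int_Yb by auto
  show "phi lam h L \<theta> a \<in> borel_measurable (disorder \<mu>)" by (rule phi_meas)
  fix \<omega>
  show "min (\<theta> + ln (kap L) - ca a) (- 3/2 * real L / a) \<le> phi lam h L \<theta> a \<omega>"
    unfolding phi_def by auto
  show "phi lam h L \<theta> a \<omega> \<le> \<bar>Yb lam h L \<omega>\<bar> + \<bar>ln (kap L) - ca a\<bar> + \<bar>- 3/2 * real L / a\<bar>"
  proof (cases "Yb lam h L \<omega> \<ge> \<theta>")
    case True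
    then have "phi lam h L \<theta> a \<omega> = Yb lam h L \<omega> + (ln (kap L) - ca a)" by (simp add: phi_def)
    then show ?thesis using abs_ge_self[of "Yb lam h L \<omega>"] abs_ge_self[of "ln (kap L) - ca a"]
        abs_ge_zero[of "- 3/2 * real L / a"] by linarith
  next
    case False
    then have "phi lam h L \<theta> a \<omega> = - 3/2 * real L / a" by (simp add: phi_def)
    then show ?thesis using abs_ge_zero[of "Yb lam h L \<omega>"] abs_ge_zero[of "ln (kap L) - ca a"]
        abs_ge_self[of "- 3/2 * real L / a"] by linarith
  qed
qed

lemma bb_strategy:
  assumes a: "a > 0"
  shows "bb (J * L) \<ge> real J * (\<integral>\<omega>. phi lam h L \<theta> a \<omega> \<partial>disorder \<mu>) - ca a"
proof -
  have ish: "integrable (disorder \<mu>) (\<lambda>\<omega>. phi lam h L \<theta> a (shiftw (i * (2 * L)) \<omega>))" for i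
    by (rule integrable_shift[OF P S phi_meas int_phi])
  have "(\<integral>\<omega>. (\<Sum>i<J. phi lam h L \<theta> a (shiftw (i * (2 * L)) \<omega>)) - ca a \<partial>disorder \<mu>)
      = (\<Sum>i<J. (\<integral>\<omega>. phi lam h L \<theta> a (shiftw (i * (2 * L)) \<omega>) \<partial>disorder \<mu>)) - ca a"
    using ish Bochner_Integration.integral_sum[where I="{..<J}" and M="disorder \<mu>"
        and f="\<lambda>i \<omega>. phi lam h L \<theta> a (shiftw (i * (2 * L)) \<omega>)"]
    by (simp add: D.prob_space)
  also have "\<dots> = real J * (\<integral>\<omega>. phi lam h L \<theta> a \<omega> \<partial>disorder \<mu>) - ca a"
    using integral_shift[OF P S phi_meas] by simp
  finally have eq: "(\<integral>\<omega>. (\<Sum>i<J. phi lam h L \<theta> a (shiftw (i * (2 * L)) \<omega>)) - ca a \<partial>disorder \<mu>)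
      = real J * (\<integral>\<omega>. phi lam h L \<theta> a \<omega> \<partial>disorder \<mu>) - ca a" .
  have "(\<integral>\<omega>. (\<Sum>i<J. phi lam h L \<theta> a (shiftw (i * (2 * L)) \<omega>)) - ca a \<partial>disorder \<mu>) \<le> bb (J * L)"
    unfolding bb_def by (intro integral_mono int_lnZr strategy[OF a]) (use ish in auto)
  then show ?thesis unfolding eq .
qed

lemma Ephi_lower:
  assumes p: "pind L \<theta> > 0" and L: "L \<ge> 1"
  shows "(\<integral>\<omega>. phi lam h L \<theta> (real L / pind L \<theta>) \<omega> \<partial>disorder \<mu>)
     \<ge> pind L \<theta> * (\<theta> + ln (kap L) - ca (real L / pind L \<theta>)) - 3/2 * pind L \<theta>"
proof -
  let ?p = "pind L \<theta>" and ?a = "real L / pind L \<theta>"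
  let ?C = "\<theta> + ln (kap L) - ca ?a"
  have a: "?a > 0" using p L by simp
  have "(\<integral>\<omega>. (if Yb lam h L \<omega> \<ge> \<theta> then 1 else 0) * ?C - 3/2 * real L / ?a \<partial>disorder \<mu>)
      \<le> (\<integral>\<omega>. phi lam h L \<theta> ?a \<omega> \<partial>disorder \<mu>)"
  proof (intro integral_mono int_phi)
    show "integrable (disorder \<mu>) (\<lambda>\<omega>. (if Yb lam h L \<omega> \<ge> \<theta> then 1 else 0) * ?C - 3/2 * real L / ?a)"
      using int_ind[where L=L and t=\<theta>] by auto
    fix \<omega>
    show "(if Yb lam h L \<omega> \<ge> \<theta> then 1 else 0) * ?C - 3/2 * real L / ?a \<le> phi lam h L \<theta> ?a \<omega>"
      unfolding phi_def using a pind_bounds(1)[where L=L and t=\<theta>] by (auto simp: divide_nonneg_pos)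
  qed
  also have "(\<integral>\<omega>. (if Yb lam h L \<omega> \<ge> \<theta> then 1 else 0) * ?C - 3/2 * real L / ?a \<partial>disorder \<mu>)
      = ?p * ?C - 3/2 * real L / ?a"
    using int_ind[where L=L and t=\<theta>] unfolding pind_def by (simp add: D.prob_space)
  also have "3/2 * real L / ?a = 3/2 * ?p" using p L by simp
  finally show ?thesis .
qed

lemma bb_positive:
  assumes E0: "(\<integral>x. x \<partial>\<mu>) = 0"
    and H: "h < 3 / (4 * lam) * ln (mgf \<mu> (- 4 * lam / 3))"
  shows "\<exists>k0\<ge>1. bb k0 > 0"
proof -
  define M1 where "M1 = mgf \<mu> (- 4 * lam / 3)"
  define m1 where "m1 = exp ((-4*lam/3) * h) * mgf \<mu> (-4*lam/3)"
  define m2 where "m2 = exp ((-8*lam/3) * h) * mgf \<mu> (-8*lam/3)"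
  have M1p: "M1 \<ge> 1" unfolding M1_def by (rule mgf_ge1[OF E0])
  have "exp (ln M1) = M1" using M1p by simp
  then have "m1 = exp ((-4*lam/3) * h) * exp (ln M1)" unfolding m1_def M1_def by simp
  then have m1eq: "m1 = exp ((-4*lam/3) * h + ln M1)" unfolding exp_add .
  have "4 * lam / 3 * h < ln M1"
  proof -
    have "4 * lam / 3 * h < 4 * lam / 3 * (3 / (4 * lam) * ln M1)"
      using H lam unfolding M1_def by (intro mult_strict_left_mono) auto
    also have "\<dots> = ln M1" using lam by simp
    finally show ?thesis .
  qed
  then have lm1: "ln m1 > 0" unfolding m1eq by simp
  have m1p: "m1 > 0" unfolding m1_def using mgf_ge1[OF E0, of "-4*lam/3"] by simp
  have m2p: "m2 > 0" unfolding m2_def using mgf_ge1[OF E0, of "-8*lam/3"] by simp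
  define K0 :: nat where "K0 = nat \<lceil>ln m2\<rceil>"
  have K0: "real K0 \<ge> ln m2" unfolding K0_def by linarith
  define K where "K = 3 * (real K0 + 1) * exp (11/3)"
  have Kp: "K > 0" unfolding K_def by (simp add: add_pos_nonneg)
  have lim: "((\<lambda>x::real. (2 + K*x*(x+1)^2)/exp(2*x*ln m1)) \<longlongrightarrow> 0) at_top"
    using lm1 Kp by real_asymp
  then have "\<forall>\<^sub>F x in at_top. (2 + K*x*(x+1)^2)/exp(2*x*ln m1) < 1"
    by (rule order_tendstoD) simp
  then obtain X0 where X0: "\<And>x. x \<ge> X0 \<Longrightarrow> (2 + K*x*(x+1)^2)/exp(2*x*ln m1) < 1"
    by (auto simp: eventually_at_top_linorder)
  define L :: nat where "L = nat \<lceil>X0\<rceil> + 1"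
  have L1: "L \<ge> 1" unfolding L_def by simp
  have LX: "real L \<ge> X0" unfolding L_def by linarith
  define c where "c = 2 * ln (real L + 1) + 3"
  define n where "n = 3 * L * K0"
  have A1: "m1 ^ (2*L) > 2 + real n * exp (2/3 + c)"
  proof -
    have "(2 + K * real L * (real L + 1)^2) / exp (2 * real L * ln m1) < 1" using X0[OF LX] .
    then have "2 + K * real L * (real L + 1)^2 < exp (2 * real L * ln m1)" by simp
    also have "exp (2 * real L * ln m1) = exp (real (2*L) * ln m1)" by simp
    also have "\<dots> = exp (ln m1) ^ (2*L)" by (rule exp_of_nat_mult)
    also have "\<dots> = m1 ^ (2*L)" using m1p by simp
    finally have B: "2 + K * real L * (real L + 1)^2 < m1 ^ (2*L)" .
    have "exp (2/3 + c) = exp (11/3) * (real L + 1)^2"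
    proof -
      have "exp (2/3 + c) = exp (11/3) * exp (2 * ln (real L + 1))" unfolding c_def by (simp add: exp_add[symmetric])
      also have "exp (2 * ln (real L + 1)) = exp (real 2 * ln (real L + 1))" by simp
      also have "\<dots> = exp (ln (real L + 1)) ^ 2" by (rule exp_of_nat_mult)
      also have "\<dots> = (real L + 1)^2" by simp
      finally show ?thesis .
    qed
    then have "real n * exp (2/3 + c) = 3 * real K0 * exp (11/3) * real L * (real L + 1)^2"
      unfolding n_def by simp
    also have "\<dots> \<le> K * real L * (real L + 1)^2"
      unfolding K_def by (intro mult_right_mono) auto
    finally show ?thesis using B by linarith
  qed
  have A2: "m2 ^ (2*L) \<le> exp (2/3 * real n)"
  proof -
    have "exp (real (2*L) * ln m2) = exp (ln m2) ^ (2*L)" by (rule exp_of_nat_mult)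
    then have "m2 ^ (2*L) = exp (real (2*L) * ln m2)" using m2p by simp
    also have "\<dots> \<le> exp (real (2*L) * real K0)" using K0 by (intro iffD2[OF exp_le_cancel_iff] mult_left_mono) auto
    also have "real (2*L) * real K0 = 2/3 * real n" unfolding n_def by simp
    finally show ?thesis .
  qed
  obtain i where i: "i < n" "pind L (real i) \<ge> exp (c - 2/3 * real i)"
    using exists_level[where L=L and n=n and c=c] A1 A2 unfolding m1_def m2_def by blast
  define \<theta> where "\<theta> = real i"
  define p where "p = pind L \<theta>"
  have pp: "p > 0" using i(2) unfolding p_def \<theta>_def by (smt (verit) exp_gt_zero)
  have p1: "p \<le> 1" unfolding p_def by (rule pind_bounds(2))
  define a where "a = real L / p"
  have ap: "a > 0" unfolding a_def using pp L1 by simp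
  have lnp: "ln p \<ge> c - 2/3 * \<theta>"
    using i(2) pp unfolding p_def \<theta>_def by (metis ln_exp ln_le_cancel_iff exp_gt_zero)
  have Ephi: "(\<integral>\<omega>. phi lam h L \<theta> a \<omega> \<partial>disorder \<mu>) \<ge> p"
  proof -
    have E: "(\<integral>\<omega>. phi lam h L \<theta> a \<omega> \<partial>disorder \<mu>) \<ge> p * (\<theta> + ln (kap L) - ca a) - 3/2 * p"
      using Ephi_lower[where L=L and \<theta>=\<theta>] pp L1 unfolding p_def a_def by simp
    have lk: "ln (kap L) \<ge> - ln 2 - 3/2 * ln (real L + 1)" by (rule ln_kap)
    have ca: "ca a = ln 2 + 3/2 * (ln (real L) - ln p - 1) + 3/2 * p / real L"
      unfolding ca_def a_def using pp L1 by (simp add: ln_div)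
    have lL: "ln (real L) \<le> ln (real L + 1)" using L1 by simp
    have pL: "p / real L \<le> 1" using p1 L1 by (simp add: divide_le_eq_1)
    have l2: "ln (2::real) \<le> 1" using ln_2_less_1 by simp
    have "\<theta> + ln (kap L) - ca a \<ge> 5/2"
      using lnp lk ca lL pL l2 unfolding c_def by (simp add: field_simps)
    then have "p * (\<theta> + ln (kap L) - ca a) \<ge> p * (5/2)" using pp by (intro mult_left_mono) auto
    then show ?thesis using E by linarith
  qed
  define J :: nat where "J = nat \<lceil>(ca a + 1) / p\<rceil> + 1"
  have "real J > (ca a + 1) / p" unfolding J_def by linarith
  then have "real J * p > ca a + 1" using pp by (simp add: field_simps)
  then have "real J * (\<integral>\<omega>. phi lam h L \<theta> a \<omega> \<partial>disorder \<mu>) > ca a"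
    using Ephi by (smt (verit) of_nat_0_le_iff mult_left_mono)
  then have "bb (J * L) > 0" using bb_strategy[OF ap, where J=J and L=L and \<theta>=\<theta>] by linarith
  moreover have "J * L \<ge> 1" unfolding J_def using L1 by simp
  ultimately show ?thesis by blast
qed

lemma main_ctx:
  assumes E0: "(\<integral>x. x \<partial>\<mu>) = 0"
    and H: "h < 3 / (4 * lam) * ln (mgf \<mu> (- 4 * lam / 3))"
  shows "free_energy \<mu> lam h > 0"
proof -
  obtain k0 where "k0 \<ge> 1" "bb k0 > 0" using bb_positive[OF E0 H] by blast
  then show ?thesis by (rule final_step)
qed

end

theorem theorem1p1:
  fixes \<mu> :: "real measure" and lam h :: real
  assumes "prob_space \<mu>"
    and "sets \<mu> = sets borel"
    and "\<And>\<alpha>. integrable \<mu> (\<lambda>x. exp (\<alpha> * x))"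
    and "(\<integral>x. x \<partial>\<mu>) = 0"
    and "(\<integral>x. x ^ 2 \<partial>\<mu>) = 1"
    and "lam > 0" and "h \<ge> 0"
    and "h < 3 / (4 * lam) * ln (mgf \<mu> (- 4 * lam / 3))"
  shows "free_energy \<mu> lam h > 0"
  proof -
  show ?thesis
    by (rule main_ctx[OF assms(1) assms(2) assms(3) assms(6) assms(4) assms(8)])
qed

end
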